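(* Let $G$ be a graph containing no induced triangle and no induced path on $5$ vertices. Then $\operatorname{reg}(G)$ equals the maximum, over all families $\{H_1,\dots,H_r\}$ of pairwise vertex-disjoint induced subgraphs of $G$ each isomorphic to $K_2$ or to the $5$-cycle $C_5$ and with no edges of $G$ between distinct $H_i$, of $(\#\{i:H_i\cong K_2\})+2(\#\{i:H_i\cong C_5\})$ (the empty family giving $0$).
   Context: $\operatorname{reg}(G)=\max\{j\ge0:\widetilde H_{j-1}(\operatorname{Ind}(G[S]);\Bbbk)\neq0\text{ for some }S\subseteq V(G)\}$ over a field $\Bbbk$, where $\operatorname{Ind}$ is the independence complex (regularity of $R/I(G)$ for the edge ideal). *)

theory Defs
  imports Main
begin

definition simple_graph :: "'a set \<Rightarrow> ('a \<Rightarrow> 'a \<Rightarrow> bool) \<Rightarrow> bool" where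
  "simple_graph V E \<longleftrightarrow> finite V \<and> (\<forall>x y. E x y \<longrightarrow> E y x)
     \<and> (\<forall>x. \<not> E x x) \<and> (\<forall>x y. E x y \<longrightarrow> x \<in> V \<and> y \<in> V)"

definition ind_complex :: "('a \<Rightarrow> 'a \<Rightarrow> bool) \<Rightarrow> 'a set \<Rightarrow> 'a set set" where
  "ind_complex E S = {F. F \<subseteq> S \<and> (\<forall>x\<in>F. \<forall>y\<in>F. \<not> E x y)}"

text \<open>A chain of faces of size m
(i.e. dimension m-1) is a function on sets supported on faces of the complex of card m.
Orientation is induced by the linear order on vertices.\<close>

definition is_chain :: "'a set set \<Rightarrow> nat \<Rightarrow> ('a set \<Rightarrow> 'k::field) \<Rightarrow> bool" where
  "is_chain \<Delta> m c \<longleftrightarrow> (\<forall>F. c F \<noteq> 0 \<longrightarrow> F \<in> \<Delta> \<and> card F = m)"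

definition bd_sign :: "'a::linorder set \<Rightarrow> 'a set \<Rightarrow> 'k::field" where
  "bd_sign \<sigma> \<tau> = (-1) ^ card {x\<in>\<tau>. \<exists>v\<in>\<sigma> - \<tau>. x < v}"

definition boundary :: "'a::linorder set set \<Rightarrow> ('a set \<Rightarrow> 'k::field) \<Rightarrow> ('a set \<Rightarrow> 'k)" where
  "boundary \<Delta> c \<tau> = (\<Sum>\<sigma>\<in>{\<sigma>\<in>\<Delta>. \<tau> \<subseteq> \<sigma> \<and> card \<sigma> = Suc (card \<tau>)}. bd_sign \<sigma> \<tau> * c \<sigma>)"

text \<open>Reduced homology \<open>H~_{m-1}(\<Delta>; k)\<close> is nonzero: there is a cycle on faces of size m
that is not a boundary of a chain on faces of size m+1. (For m = 0 every chain is a cycle,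
the augmented complex having nothing in dimension -2.)\<close>

definition red_homology_nonzero :: "'k::field itself \<Rightarrow> 'a::linorder set set \<Rightarrow> nat \<Rightarrow> bool" where
  "red_homology_nonzero _ \<Delta> m \<longleftrightarrow>
     (\<exists>z :: 'a set \<Rightarrow> 'k. is_chain \<Delta> m z \<and> (m > 0 \<longrightarrow> boundary \<Delta> z = (\<lambda>_. 0))
        \<and> \<not> (\<exists>b :: 'a set \<Rightarrow> 'k. is_chain \<Delta> (Suc m) b \<and> boundary \<Delta> b = z))"

definition reg :: "'k::field itself \<Rightarrow> 'a::linorder set \<Rightarrow> ('a \<Rightarrow> 'a \<Rightarrow> bool) \<Rightarrow> nat" where
  "reg K V E = Max {j. \<exists>S\<subseteq>V. red_homology_nonzero K (ind_complex E S) j}"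

definition has_induced_triangle :: "'a set \<Rightarrow> ('a \<Rightarrow> 'a \<Rightarrow> bool) \<Rightarrow> bool" where
  "has_induced_triangle V E \<longleftrightarrow> (\<exists>x\<in>V. \<exists>y\<in>V. \<exists>z\<in>V. E x y \<and> E y z \<and> E x z)"

definition has_induced_P5 :: "'a set \<Rightarrow> ('a \<Rightarrow> 'a \<Rightarrow> bool) \<Rightarrow> bool" where
  "has_induced_P5 V E \<longleftrightarrow> (\<exists>f :: nat \<Rightarrow> 'a. inj_on f {0..<5} \<and> f ` {0..<5} \<subseteq> V
      \<and> (\<forall>i<5. \<forall>j<5. E (f i) (f j) \<longleftrightarrow> (j = i + 1 \<or> i = j + 1)))"

definition induced_K2 :: "('a \<Rightarrow> 'a \<Rightarrow> bool) \<Rightarrow> 'a set \<Rightarrow> bool" where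
  "induced_K2 E W \<longleftrightarrow> (\<exists>x y. W = {x, y} \<and> x \<noteq> y \<and> E x y)"

definition induced_C5 :: "('a \<Rightarrow> 'a \<Rightarrow> bool) \<Rightarrow> 'a set \<Rightarrow> bool" where
  "induced_C5 E W \<longleftrightarrow> (\<exists>f :: nat \<Rightarrow> 'a. bij_betw f {0..<5} W
      \<and> (\<forall>i<5. \<forall>j<5. E (f i) (f j) \<longleftrightarrow> (j = (i + 1) mod 5 \<or> i = (j + 1) mod 5)))"

definition admissible_family :: "'a set \<Rightarrow> ('a \<Rightarrow> 'a \<Rightarrow> bool) \<Rightarrow> 'a set set \<Rightarrow> bool" where
  "admissible_family V E \<H> \<longleftrightarrow>
     (\<forall>W\<in>\<H>. W \<subseteq> V \<and> (induced_K2 E W \<or> induced_C5 E W))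
     \<and> (\<forall>W1\<in>\<H>. \<forall>W2\<in>\<H>. W1 \<noteq> W2 \<longrightarrow> W1 \<inter> W2 = {} \<and> (\<forall>x\<in>W1. \<forall>y\<in>W2. \<not> E x y))"

definition family_value :: "('a \<Rightarrow> 'a \<Rightarrow> bool) \<Rightarrow> 'a set set \<Rightarrow> nat" where
  "family_value E \<H> = card {W\<in>\<H>. induced_K2 E W} + 2 * card {W\<in>\<H>. induced_C5 E W}"

end

theory Submission
  imports Defs
begin



definition sg :: "'a::linorder \<Rightarrow> 'a set \<Rightarrow> 'k::field" where
  "sg v \<tau> = (-1) ^ card {x\<in>\<tau>. x < v}"

lemma sg_sq: "sg v \<tau> * sg v \<tau> = (1::'k::field)"
  unfolding sg_def by (simp flip: power_add)

lemma sg_nz: "sg v \<tau> \<noteq> (0::'k::field)"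
  unfolding sg_def by simp

lemma sg_insert:
  assumes "finite \<rho>" "y \<notin> \<rho>"
  shows "sg v (insert y \<rho>) = (if y < v then -1 else 1) * (sg v \<rho> :: 'k::field)"
proof (cases "y < v")
  case True
  then have "{x\<in>insert y \<rho>. x < v} = insert y {x\<in>\<rho>. x < v}" by auto
  moreover have "card (insert y {x\<in>\<rho>. x < v}) = Suc (card {x\<in>\<rho>. x < v})"
    using assms by simp
  ultimately show ?thesis using True unfolding sg_def by simp
next
  case False
  then have "{x\<in>insert y \<rho>. x < v} = {x\<in>\<rho>. x < v}" by auto
  then show ?thesis using False unfolding sg_def by simp
qed

lemma sg_swap:
  assumes "finite \<rho>" "y \<notin> \<rho>" "v \<notin> \<rho>" "v \<noteq> y"
  shows "sg v (insert y \<rho>) * sg y (insert v \<rho>) = - (sg v \<rho> * (sg y \<rho> :: 'k::field))"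
proof (cases "y < v")
  case True
  then have "\<not> v < y" by auto
  have h1: "sg v (insert y \<rho>) = - (sg v \<rho> :: 'k)" using True assms sg_insert[of \<rho> y v] by simp
  have h2: "sg y (insert v \<rho>) = (sg y \<rho> :: 'k)" using \<open>\<not> v < y\<close> assms sg_insert[of \<rho> v y] by simp
  show ?thesis unfolding h1 h2 by simp
next
  case False
  then have "v < y" using assms(4) by auto
  have h1: "sg v (insert y \<rho>) = (sg v \<rho> :: 'k)" using False assms sg_insert[of \<rho> y v] by simp
  have h2: "sg y (insert v \<rho>) = - (sg y \<rho> :: 'k)" using \<open>v < y\<close> assms sg_insert[of \<rho> v y] by simp
  show ?thesis unfolding h1 h2 by simp
qed

lemma bd_sign_insert:
  assumes "v \<notin> \<tau>"
  shows "bd_sign (insert v \<tau>) \<tau> = sg v \<tau>"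
proof -
  have "insert v \<tau> - \<tau> = {v}" using assms by auto
  then show ?thesis unfolding bd_sign_def sg_def by simp
qed

lemma ind_complex_finite_face:
  "finite T \<Longrightarrow> F \<in> ind_complex E T \<Longrightarrow> finite F"
  unfolding ind_complex_def using finite_subset by auto

lemma ind_complex_finite:
  "finite T \<Longrightarrow> finite (ind_complex E T)"
  unfolding ind_complex_def by (rule finite_subset[of _ "Pow T"]) auto

lemma bd_alt:
  fixes c :: "'a::linorder set \<Rightarrow> 'k::field"
  assumes fin: "finite T" and supp0: "\<forall>F. c F \<noteq> 0 \<longrightarrow> F \<in> ind_complex E T"
  shows "boundary (ind_complex E T) c \<tau> = (\<Sum>v\<in>T-\<tau>. sg v \<tau> * c (insert v \<tau>))"
proof (cases "\<tau> \<subseteq> T")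
  note supp = supp0[rule_format]
  case False
  have l: "{\<sigma>\<in>ind_complex E T. \<tau> \<subseteq> \<sigma> \<and> card \<sigma> = Suc (card \<tau>)} = {}"
    using False unfolding ind_complex_def by auto
  have "c (insert v \<tau>) = 0" for v
    using supp[of "insert v \<tau>"] False unfolding ind_complex_def by auto
  then show ?thesis unfolding boundary_def l by simp
next
  case True
  note supp = supp0[rule_format]
  then have ft: "finite \<tau>" using fin finite_subset True by auto
  let ?A = "{\<sigma>\<in>ind_complex E T. \<tau> \<subseteq> \<sigma> \<and> card \<sigma> = Suc (card \<tau>)}"
  let ?B = "{v\<in>T-\<tau>. insert v \<tau> \<in> ind_complex E T}"
  have bij: "bij_betw (\<lambda>v. insert v \<tau>) ?B ?A"
  proof (rule bij_betwI')
    show "\<And>x y. x \<in> ?B \<Longrightarrow> y \<in> ?B \<Longrightarrow> (insert x \<tau> = insert y \<tau>) = (x = y)"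
      by auto
    show "\<And>x. x \<in> ?B \<Longrightarrow> insert x \<tau> \<in> ?A" using ft by auto
    fix \<sigma> assume s: "\<sigma> \<in> ?A"
    then have fs: "finite \<sigma>" using ind_complex_finite_face[OF fin] by auto
    have "card (\<sigma> - \<tau>) = 1" using s fs ft by (simp add: card_Diff_subset)
    then obtain v where v: "\<sigma> - \<tau> = {v}" using card_1_singletonE by blast
    have "\<sigma> = insert v \<tau>" using v s by auto
    moreover have "v \<in> T" using v s unfolding ind_complex_def by auto
    ultimately show "\<exists>x\<in>?B. \<sigma> = insert x \<tau>" using v s by auto
  qed
  have "boundary (ind_complex E T) c \<tau> = (\<Sum>\<sigma>\<in>?A. bd_sign \<sigma> \<tau> * c \<sigma>)"
    unfolding boundary_def by simp
  also have "\<dots> = (\<Sum>v\<in>?B. bd_sign (insert v \<tau>) \<tau> * c (insert v \<tau>))"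
    using sum.reindex_bij_betw[OF bij, of "\<lambda>\<sigma>. bd_sign \<sigma> \<tau> * c \<sigma>"] by simp
  also have "\<dots> = (\<Sum>v\<in>?B. sg v \<tau> * c (insert v \<tau>))"
    by (rule sum.cong) (auto simp: bd_sign_insert)
  also have "\<dots> = (\<Sum>v\<in>T-\<tau>. sg v \<tau> * c (insert v \<tau>))"
    by (rule sum.mono_neutral_left) (use fin supp in auto)
  finally show ?thesis .
qed

lemma chain_zero_outside:
  "(\<And>F. c F \<noteq> 0 \<Longrightarrow> F \<in> \<Delta>) \<Longrightarrow> F \<notin> \<Delta> \<Longrightarrow> c F = 0"
  by blast




lemma face_finite: "finite T \<Longrightarrow> (\<And>F. c F \<noteq> 0 \<Longrightarrow> F \<in> ind_complex E T) \<Longrightarrow> infinite F \<Longrightarrow> c F = 0"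
  using ind_complex_finite_face by blast

lemma cone_vanish:
  fixes E :: "'a::linorder \<Rightarrow> 'a \<Rightarrow> bool"
  assumes fin: "finite T" and y: "y \<in> T" and iso: "\<forall>v\<in>T. \<not> E y v \<and> \<not> E v y" and irr: "\<not> E y y"
  shows "\<not> red_homology_nonzero (K::'k::field itself) (ind_complex E T) m"
proof
  assume "red_homology_nonzero K (ind_complex E T) m"
  then obtain z :: "'a set \<Rightarrow> 'k" where ch: "is_chain (ind_complex E T) m z"
    and cyc: "m > 0 \<longrightarrow> boundary (ind_complex E T) z = (\<lambda>_. 0)"
    and nb: "\<not> (\<exists>b :: 'a set \<Rightarrow> 'k. is_chain (ind_complex E T) (Suc m) b \<and> boundary (ind_complex E T) b = z)"
    unfolding red_homology_nonzero_def by blast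
  have zs: "z F \<noteq> 0 \<Longrightarrow> F \<in> ind_complex E T \<and> card F = m" for F using ch unfolding is_chain_def by blast
  define c where "c \<sigma> = (if y \<in> \<sigma> then sg y (\<sigma> - {y}) * z (\<sigma> - {y}) else 0)" for \<sigma>
  have insy: "insert y F \<in> ind_complex E T" if "F \<in> ind_complex E T" for F
    using that y iso irr unfolding ind_complex_def by auto
  have chc: "is_chain (ind_complex E T) (Suc m) c"
    unfolding is_chain_def
  proof (intro allI impI)
    fix \<sigma> assume "c \<sigma> \<noteq> 0"
    then have ys: "y \<in> \<sigma>" and nz: "z (\<sigma> - {y}) \<noteq> 0" unfolding c_def by (auto split: if_splits)
    from zs[OF nz] have f: "\<sigma> - {y} \<in> ind_complex E T" "card (\<sigma> - {y}) = m" by auto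
    have "\<sigma> = insert y (\<sigma> - {y})" using ys by auto
    moreover have "finite (\<sigma> - {y})" using f(1) ind_complex_finite_face[OF fin] by blast
    ultimately show "\<sigma> \<in> ind_complex E T \<and> card \<sigma> = Suc m"
      using insy[OF f(1)] f(2) by (metis card_insert_disjoint Diff_iff insertI1)
  qed
  have csa: "\<forall>F. c F \<noteq> 0 \<longrightarrow> F \<in> ind_complex E T" using chc unfolding is_chain_def by blast
  have zsa: "\<forall>F. z F \<noteq> 0 \<longrightarrow> F \<in> ind_complex E T" using zs by blast
  note cs = csa[rule_format] and zs' = zsa[rule_format]
  have "boundary (ind_complex E T) c \<tau> = z \<tau>" for \<tau>
  proof -
    have bd: "boundary (ind_complex E T) c \<tau> = (\<Sum>v\<in>T-\<tau>. sg v \<tau> * c (insert v \<tau>))"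
      by (rule bd_alt[OF fin csa])
    show ?thesis
    proof (cases "finite \<tau>")
      case False
      then have "z \<tau> = 0" using zs'[of \<tau>] ind_complex_finite_face[OF fin] by blast
      moreover have "c (insert v \<tau>) = 0" for v using False cs[of "insert v \<tau>"] ind_complex_finite_face[OF fin] by (metis finite_insert)
      ultimately show ?thesis using bd by simp
    next
      case ft: True
      show ?thesis
      proof (cases "y \<in> \<tau>")
        case False
        have "(\<Sum>v\<in>T-\<tau>. sg v \<tau> * c (insert v \<tau>)) = sg y \<tau> * c (insert y \<tau>) + (\<Sum>v\<in>(T-\<tau>)-{y}. sg v \<tau> * c (insert v \<tau>))"
          using False y fin by (subst sum.remove[of _ y]) auto
        also have "(\<Sum>v\<in>(T-\<tau>)-{y}. sg v \<tau> * c (insert v \<tau>)) = 0"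
          using False by (intro sum.neutral) (auto simp: c_def)
        also have "c (insert y \<tau>) = sg y \<tau> * z \<tau>" using False by (simp add: c_def)
        finally show ?thesis using bd by (simp add: mult.assoc[symmetric] sg_sq)
      next
        case True
        define \<rho> where "\<rho> = \<tau> - {y}"
        have \<tau>: "\<tau> = insert y \<rho>" and yr: "y \<notin> \<rho>" and fr: "finite \<rho>" using True ft by (auto simp: \<rho>_def)
        have cv: "c (insert v \<tau>) = sg y (insert v \<rho>) * z (insert v \<rho>)" if "v \<notin> \<tau>" for v
        proof -
          have "insert v \<tau> - {y} = insert v \<rho>" using that True by (auto simp: \<rho>_def)
          then show ?thesis using True by (simp add: c_def)
        qed
        show ?thesis
        proof (cases "m = 0")
          case True
          have "z \<tau> = 0" using zs[of \<tau>] True \<tau> fr by auto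
          moreover have "z (insert v \<rho>) = 0" for v using zs[of "insert v \<rho>"] True fr by auto
          ultimately show ?thesis using bd cv by simp
        next
          case False
          have "boundary (ind_complex E T) z \<rho> = 0" using cyc False by simp
          then have "0 = (\<Sum>v\<in>T-\<rho>. sg v \<rho> * z (insert v \<rho>))" using bd_alt[OF fin zsa] by simp
          also have "T - \<rho> = insert y (T - \<tau>)" using y \<tau> yr by auto
          also have "(\<Sum>v\<in>insert y (T - \<tau>). sg v \<rho> * z (insert v \<rho>)) =
              sg y \<rho> * z \<tau> + (\<Sum>v\<in>T-\<tau>. sg v \<rho> * z (insert v \<rho>))"
            using fin \<tau> by (subst sum.insert) auto
          finally have e0: "(\<Sum>v\<in>T-\<tau>. sg v \<rho> * z (insert v \<rho>)) = - (sg y \<rho> * z \<tau>)"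
            by (simp add: eq_neg_iff_add_eq_0 add.commute)
          have "(\<Sum>v\<in>T-\<tau>. sg v \<tau> * c (insert v \<tau>)) = (\<Sum>v\<in>T-\<tau>. - sg y \<rho> * (sg v \<rho> * z (insert v \<rho>)))"
          proof (rule sum.cong)
            fix v assume "v \<in> T - \<tau>"
            then have v: "v \<notin> \<rho>" "v \<noteq> y" "v \<notin> \<tau>" using \<tau> by auto
            have "sg v \<tau> * c (insert v \<tau>) = (sg v (insert y \<rho>) * sg y (insert v \<rho>)) * z (insert v \<rho>)"
              using cv[OF v(3)] \<tau> by (simp add: mult.assoc)
            also have "\<dots> = - (sg v \<rho> * sg y \<rho>) * z (insert v \<rho>)"
              unfolding sg_swap[OF fr yr v(1) v(2)] by simp
            finally show "sg v \<tau> * c (insert v \<tau>) = - sg y \<rho> * (sg v \<rho> * z (insert v \<rho>))"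
              by (simp add: algebra_simps)
          qed simp
          also have "\<dots> = - sg y \<rho> * (\<Sum>v\<in>T-\<tau>. sg v \<rho> * z (insert v \<rho>))"
            by (simp add: sum_distrib_left)
          also have "\<dots> = z \<tau>" unfolding e0 by (simp add: mult.assoc[symmetric] sg_sq)
          finally show ?thesis using bd by simp
        qed
      qed
    qed
  qed
  then have "boundary (ind_complex E T) c = z" by auto
  with chc nb show False by blast
qed




lemma ind_mono: "S \<subseteq> T \<Longrightarrow> F \<in> ind_complex E S \<Longrightarrow> F \<in> ind_complex E T"
  unfolding ind_complex_def by auto

lemma mv:
  fixes E :: "'a::linorder \<Rightarrow> 'a \<Rightarrow> bool"
  assumes fin: "finite T" and x: "x \<in> T" and sym: "\<forall>a b. E a b \<longrightarrow> E b a" and irr: "\<forall>a. \<not> E a a"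
    and rh: "red_homology_nonzero (K::'k::field itself) (ind_complex E T) m"
  shows "red_homology_nonzero K (ind_complex E (T - {x})) m
     \<or> (\<exists>k. m = Suc k \<and> red_homology_nonzero K (ind_complex E (T - insert x {v. E x v})) k)"
proof -
  define L where "L = T - insert x {v. E x v}"
  have finL: "finite L" and finT': "finite (T - {x})" using fin by (auto simp: L_def)
  have xL: "x \<notin> L" by (auto simp: L_def)
  have LT: "L \<subseteq> T - {x}" by (auto simp: L_def)
  have insx: "insert x \<rho> \<in> ind_complex E T \<longleftrightarrow> \<rho> \<in> ind_complex E L" if "x \<notin> \<rho>" for \<rho>
    using that x sym irr unfolding ind_complex_def L_def by auto
  have noxD': "\<sigma> \<in> ind_complex E (T - {x}) \<longleftrightarrow> \<sigma> \<in> ind_complex E T \<and> x \<notin> \<sigma>" for \<sigma>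
    unfolding ind_complex_def by auto
  have inL: "\<sigma> \<in> ind_complex E L \<Longrightarrow> \<sigma> \<in> ind_complex E T" for \<sigma>
    using ind_mono[of L T] by (auto simp: L_def)
  obtain z :: "'a set \<Rightarrow> 'k" where ch: "is_chain (ind_complex E T) m z"
    and cyc: "m > 0 \<longrightarrow> boundary (ind_complex E T) z = (\<lambda>_. 0)"
    and nb: "\<not> (\<exists>b :: 'a set \<Rightarrow> 'k. is_chain (ind_complex E T) (Suc m) b \<and> boundary (ind_complex E T) b = z)"
    using rh unfolding red_homology_nonzero_def by blast
  have zs: "z F \<noteq> 0 \<Longrightarrow> F \<in> ind_complex E T \<and> card F = m" for F using ch unfolding is_chain_def by blast
  have zsa: "\<forall>F. z F \<noteq> 0 \<longrightarrow> F \<in> ind_complex E T" using zs by blast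
  have zfin: "z F \<noteq> 0 \<Longrightarrow> finite F" for F using zs ind_complex_finite_face[OF fin] by blast
  obtain k where mk: "m = Suc k"
  proof (cases m)
    case 0
    define b where "b \<sigma> = (if \<sigma> = {x} then z {} else 0)" for \<sigma>
    have xface: "{x} \<in> ind_complex E T" using x irr unfolding ind_complex_def by auto
    have chb: "is_chain (ind_complex E T) (Suc m) b"
      unfolding is_chain_def b_def using xface 0 by auto
    have bsa: "\<forall>F. b F \<noteq> 0 \<longrightarrow> F \<in> ind_complex E T" using chb unfolding is_chain_def by blast
    have "boundary (ind_complex E T) b \<tau> = z \<tau>" for \<tau>
    proof (cases "\<tau> = {}")
      case True
      have "(\<Sum>v\<in>T-\<tau>. sg v \<tau> * b (insert v \<tau>)) = sg x \<tau> * b (insert x \<tau>) + (\<Sum>v\<in>(T-\<tau>)-{x}. sg v \<tau> * b (insert v \<tau>))"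
        using True x fin by (subst sum.remove[of _ x]) auto
      also have "(\<Sum>v\<in>(T-\<tau>)-{x}. sg v \<tau> * b (insert v \<tau>)) = 0"
        using True by (intro sum.neutral) (auto simp: b_def)
      finally show ?thesis using True unfolding bd_alt[OF fin bsa] by (simp add: b_def sg_def)
    next
      case False
      have "z \<tau> = 0" using zs[of \<tau>] zfin[of \<tau>] 0 False by auto
      moreover have "(\<Sum>v\<in>T-\<tau>. sg v \<tau> * b (insert v \<tau>)) = 0"
        using False by (intro sum.neutral) (auto simp: b_def)
      ultimately show ?thesis unfolding bd_alt[OF fin bsa] by simp
    qed
    then have "boundary (ind_complex E T) b = z" by auto
    with chb nb show ?thesis by blast
  qed
  have cycz: "boundary (ind_complex E T) z \<tau> = 0" for \<tau> using cyc mk by simp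
  define w where "w \<rho> = (if x \<notin> \<rho> then sg x \<rho> * z (insert x \<rho>) else 0)" for \<rho>
  show ?thesis
  proof (cases "\<exists>u :: 'a set \<Rightarrow> 'k. is_chain (ind_complex E L) (Suc k) u \<and> boundary (ind_complex E L) u = w")
    case False
    have chw: "is_chain (ind_complex E L) k w"
      unfolding is_chain_def
    proof (intro allI impI)
      fix \<rho> assume "w \<rho> \<noteq> 0"
      then have xr: "x \<notin> \<rho>" and nz: "z (insert x \<rho>) \<noteq> 0" by (auto simp: w_def split: if_splits)
      have "insert x \<rho> \<in> ind_complex E T" "card (insert x \<rho>) = Suc k" using zs[OF nz] mk by auto
      moreover have "finite \<rho>" using zfin[OF nz] by simp
      ultimately show "\<rho> \<in> ind_complex E L \<and> card \<rho> = k" using insx[OF xr] xr by simp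
    qed
    have wsa: "\<forall>F. w F \<noteq> 0 \<longrightarrow> F \<in> ind_complex E L" using chw unfolding is_chain_def by blast
    have "boundary (ind_complex E L) w \<pi> = 0" for \<pi>
    proof -
      have bd: "boundary (ind_complex E L) w \<pi> = (\<Sum>v\<in>L-\<pi>. sg v \<pi> * w (insert v \<pi>))"
        by (rule bd_alt[OF finL wsa])
      show ?thesis
      proof (cases "finite \<pi> \<and> x \<notin> \<pi>")
        case False
        have "w (insert v \<pi>) = 0" for v
        proof (cases "finite \<pi>")
          case False
          then show ?thesis using wsa ind_complex_finite_face[OF finL] by (metis finite_insert)
        next
          case True
          then show ?thesis using \<open>\<not> (finite \<pi> \<and> x \<notin> \<pi>)\<close> by (simp add: w_def)
        qed
        then show ?thesis using bd by simp
      next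
        case True
        then have fp: "finite \<pi>" and xp: "x \<notin> \<pi>" by auto
        have "0 = boundary (ind_complex E T) z (insert x \<pi>)" using cycz by simp
        also have "\<dots> = (\<Sum>v\<in>T - insert x \<pi>. sg v (insert x \<pi>) * z (insert v (insert x \<pi>)))"
          by (rule bd_alt[OF fin zsa])
        also have "\<dots> = (\<Sum>v\<in>L - \<pi>. sg v (insert x \<pi>) * z (insert v (insert x \<pi>)))"
        proof (rule sum.mono_neutral_right)
          show "finite (T - insert x \<pi>)" using fin by simp
          show "L - \<pi> \<subseteq> T - insert x \<pi>" using LT by auto
          show "\<forall>v\<in>T - insert x \<pi> - (L - \<pi>). sg v (insert x \<pi>) * z (insert v (insert x \<pi>)) = 0"
          proof
            fix v assume "v \<in> T - insert x \<pi> - (L - \<pi>)"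
            then have "E x v" by (auto simp: L_def)
            then have "insert v (insert x \<pi>) \<notin> ind_complex E T" unfolding ind_complex_def by auto
            then show "sg v (insert x \<pi>) * z (insert v (insert x \<pi>)) = 0" using zsa by auto
          qed
        qed
        finally have e0: "(\<Sum>v\<in>L - \<pi>. sg v (insert x \<pi>) * z (insert v (insert x \<pi>))) = 0" by simp
        have "(\<Sum>v\<in>L-\<pi>. sg v \<pi> * w (insert v \<pi>)) = (\<Sum>v\<in>L-\<pi>. - sg x \<pi> * (sg v (insert x \<pi>) * z (insert v (insert x \<pi>))))"
        proof (rule sum.cong)
          fix v assume v: "v \<in> L - \<pi>"
          then have vx: "v \<noteq> x" "v \<notin> \<pi>" using xL by auto
          have sw: "sg v (insert x \<pi>) * sg x (insert v \<pi>) = - (sg v \<pi> * sg x \<pi>)"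
            by (rule sg_swap[OF fp xp vx(2) vx(1)])
          have sw2: "sg v \<pi> * sg x (insert v \<pi>) = - sg x \<pi> * sg v (insert x \<pi>)"
          proof -
            have "sg v \<pi> * sg x (insert v \<pi>) = (sg v (insert x \<pi>) * sg v (insert x \<pi>)) * (sg v \<pi> * sg x (insert v \<pi>))"
              by (simp add: sg_sq)
            also have "\<dots> = sg v (insert x \<pi>) * sg v \<pi> * (sg v (insert x \<pi>) * sg x (insert v \<pi>))"
              by (simp add: algebra_simps)
            also have "\<dots> = - sg x \<pi> * sg v (insert x \<pi>) * (sg v \<pi> * sg v \<pi>)"
              unfolding sw by (simp add: algebra_simps)
            finally show ?thesis by (simp add: sg_sq)
          qed
          have ins: "insert x (insert v \<pi>) = insert v (insert x \<pi>)" by auto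
          have "sg v \<pi> * w (insert v \<pi>) = (sg v \<pi> * sg x (insert v \<pi>)) * z (insert v (insert x \<pi>))"
            using xp vx by (simp add: w_def ins mult.assoc)
          then show "sg v \<pi> * w (insert v \<pi>) = - sg x \<pi> * (sg v (insert x \<pi>) * z (insert v (insert x \<pi>)))"
            unfolding sw2 by (simp add: mult.assoc)
        qed simp
        also have "\<dots> = 0" unfolding sum_distrib_left[symmetric] e0 by simp
        finally show ?thesis using bd by simp
      qed
    qed
    then have "red_homology_nonzero K (ind_complex E L) k"
      unfolding red_homology_nonzero_def using chw False by auto
    then show ?thesis using mk L_def by auto
  next
    case True
    then obtain u :: "'a set \<Rightarrow> 'k" where chu: "is_chain (ind_complex E L) (Suc k) u"
      and bu: "boundary (ind_complex E L) u = w" by blast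
    have usa: "\<forall>F. u F \<noteq> 0 \<longrightarrow> F \<in> ind_complex E L" using chu unfolding is_chain_def by blast
    have us: "u F \<noteq> 0 \<Longrightarrow> F \<in> ind_complex E L \<and> card F = Suc k" for F using chu unfolding is_chain_def by blast
    have usa': "\<forall>F. u F \<noteq> 0 \<longrightarrow> F \<in> ind_complex E (T - {x})" using usa ind_mono[OF LT] by blast
    have usaT: "\<forall>F. u F \<noteq> 0 \<longrightarrow> F \<in> ind_complex E T" using usa inL by blast
    define z' where "z' \<sigma> = (if x \<in> \<sigma> then 0 else z \<sigma> + u \<sigma>)" for \<sigma>
    define c where "c \<sigma> = (if x \<in> \<sigma> then sg x (\<sigma> - {x}) * u (\<sigma> - {x}) else 0)" for \<sigma>
    have chz': "is_chain (ind_complex E (T - {x})) m z'"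
      unfolding is_chain_def
    proof (intro allI impI)
      fix \<sigma> assume "z' \<sigma> \<noteq> 0"
      then have xs: "x \<notin> \<sigma>" and "z \<sigma> \<noteq> 0 \<or> u \<sigma> \<noteq> 0" by (auto simp: z'_def split: if_splits)
      then show "\<sigma> \<in> ind_complex E (T - {x}) \<and> card \<sigma> = m"
        using zs us inL noxD' mk by blast
    qed
    have z'sa: "\<forall>F. z' F \<noteq> 0 \<longrightarrow> F \<in> ind_complex E (T - {x})" using chz' unfolding is_chain_def by blast
    have bdL: "boundary (ind_complex E L) u \<pi> = (\<Sum>v\<in>(T - {x}) - \<pi>. sg v \<pi> * u (insert v \<pi>))" for \<pi>
    proof -
      have "boundary (ind_complex E L) u \<pi> = (\<Sum>v\<in>L - \<pi>. sg v \<pi> * u (insert v \<pi>))"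
        by (rule bd_alt[OF finL usa])
      also have "\<dots> = (\<Sum>v\<in>(T - {x}) - \<pi>. sg v \<pi> * u (insert v \<pi>))"
      proof (rule sum.mono_neutral_left)
        show "finite (T - {x} - \<pi>)" using fin by simp
        show "L - \<pi> \<subseteq> T - {x} - \<pi>" using LT by auto
        show "\<forall>v\<in>T - {x} - \<pi> - (L - \<pi>). sg v \<pi> * u (insert v \<pi>) = 0"
          using usa unfolding ind_complex_def by auto
      qed
      finally show ?thesis .
    qed
    have cycz': "boundary (ind_complex E (T - {x})) z' \<pi> = 0" for \<pi>
    proof -
      have bd: "boundary (ind_complex E (T - {x})) z' \<pi> = (\<Sum>v\<in>(T - {x})-\<pi>. sg v \<pi> * z' (insert v \<pi>))"
        by (rule bd_alt[OF finT' z'sa])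
      show ?thesis
      proof (cases "x \<in> \<pi>")
        case True
        then show ?thesis using bd by (simp add: z'_def)
      next
        case False
        have "(\<Sum>v\<in>(T - {x})-\<pi>. sg v \<pi> * z' (insert v \<pi>)) =
            (\<Sum>v\<in>(T - {x})-\<pi>. sg v \<pi> * z (insert v \<pi>)) + (\<Sum>v\<in>(T - {x})-\<pi>. sg v \<pi> * u (insert v \<pi>))"
          unfolding sum.distrib[symmetric] using False
          by (intro sum.cong) (auto simp: z'_def algebra_simps)
        also have "(\<Sum>v\<in>(T - {x})-\<pi>. sg v \<pi> * u (insert v \<pi>)) = w \<pi>" using bdL[of \<pi>] bu by simp
        also have "w \<pi> = sg x \<pi> * z (insert x \<pi>)" using False by (simp add: w_def)
        also have "(\<Sum>v\<in>(T - {x})-\<pi>. sg v \<pi> * z (insert v \<pi>)) = - (sg x \<pi> * z (insert x \<pi>))"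
        proof -
          have "0 = boundary (ind_complex E T) z \<pi>" using cycz by simp
          also have "\<dots> = (\<Sum>v\<in>T-\<pi>. sg v \<pi> * z (insert v \<pi>))" by (rule bd_alt[OF fin zsa])
          also have "\<dots> = sg x \<pi> * z (insert x \<pi>) + (\<Sum>v\<in>(T-\<pi>) - {x}. sg v \<pi> * z (insert v \<pi>))"
            using x False fin by (subst sum.remove[of _ x]) auto
          also have "(T-\<pi>) - {x} = (T - {x}) - \<pi>" by auto
          finally show ?thesis by (simp add: eq_neg_iff_add_eq_0 add.commute)
        qed
        finally show ?thesis using bd by simp
      qed
    qed
    have chc: "is_chain (ind_complex E T) (Suc m) c"
      unfolding is_chain_def
    proof (intro allI impI)
      fix \<sigma> assume "c \<sigma> \<noteq> 0"
      then have xs: "x \<in> \<sigma>" and nz: "u (\<sigma> - {x}) \<noteq> 0" by (auto simp: c_def split: if_splits)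
      from us[OF nz] have f: "\<sigma> - {x} \<in> ind_complex E L" "card (\<sigma> - {x}) = Suc k" by auto
      have fin': "finite (\<sigma> - {x})" using f(1) ind_complex_finite_face[OF finL] by blast
      have "insert x (\<sigma> - {x}) \<in> ind_complex E T" using insx[of "\<sigma> - {x}"] f(1) by simp
      moreover have "insert x (\<sigma> - {x}) = \<sigma>" using xs by auto
      ultimately show "\<sigma> \<in> ind_complex E T \<and> card \<sigma> = Suc m"
        using f(2) fin' mk by (metis card_insert_disjoint Diff_iff insertI1)
    qed
    have csa: "\<forall>F. c F \<noteq> 0 \<longrightarrow> F \<in> ind_complex E T" using chc unfolding is_chain_def by blast
    have bdc: "boundary (ind_complex E T) c \<tau> = (if x \<in> \<tau> then - z \<tau> else u \<tau>)" if ft: "finite \<tau>" for \<tau>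
    proof -
      have bd: "boundary (ind_complex E T) c \<tau> = (\<Sum>v\<in>T-\<tau>. sg v \<tau> * c (insert v \<tau>))"
        by (rule bd_alt[OF fin csa])
      show ?thesis
      proof (cases "x \<in> \<tau>")
        case False
        have "(\<Sum>v\<in>T-\<tau>. sg v \<tau> * c (insert v \<tau>)) = sg x \<tau> * c (insert x \<tau>) + (\<Sum>v\<in>(T-\<tau>)-{x}. sg v \<tau> * c (insert v \<tau>))"
          using False x fin by (subst sum.remove[of _ x]) auto
        also have "(\<Sum>v\<in>(T-\<tau>)-{x}. sg v \<tau> * c (insert v \<tau>)) = 0"
          using False by (intro sum.neutral) (auto simp: c_def)
        also have "c (insert x \<tau>) = sg x \<tau> * u \<tau>" using False by (simp add: c_def)
        finally show ?thesis using bd False by (simp add: mult.assoc[symmetric] sg_sq)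
      next
        case True
        define \<rho> where "\<rho> = \<tau> - {x}"
        have \<tau>: "\<tau> = insert x \<rho>" and xr: "x \<notin> \<rho>" and fr: "finite \<rho>" using True ft by (auto simp: \<rho>_def)
        have "(\<Sum>v\<in>T-\<tau>. sg v \<tau> * c (insert v \<tau>)) = (\<Sum>v\<in>T-\<tau>. - sg x \<rho> * (sg v \<rho> * u (insert v \<rho>)))"
        proof (rule sum.cong)
          fix v assume "v \<in> T - \<tau>"
          then have v: "v \<notin> \<rho>" "v \<noteq> x" "v \<notin> \<tau>" using \<tau> by auto
          have "insert v \<tau> - {x} = insert v \<rho>" using v \<tau> xr by auto
          then have "sg v \<tau> * c (insert v \<tau>) = (sg v (insert x \<rho>) * sg x (insert v \<rho>)) * u (insert v \<rho>)"
            using \<tau> by (simp add: c_def mult.assoc)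
          also have "\<dots> = - (sg v \<rho> * sg x \<rho>) * u (insert v \<rho>)"
            unfolding sg_swap[OF fr xr v(1) v(2)] by simp
          finally show "sg v \<tau> * c (insert v \<tau>) = - sg x \<rho> * (sg v \<rho> * u (insert v \<rho>))"
            by (simp add: algebra_simps)
        qed simp
        also have "\<dots> = - sg x \<rho> * (\<Sum>v\<in>T-\<tau>. sg v \<rho> * u (insert v \<rho>))"
          by (simp add: sum_distrib_left)
        also have "(\<Sum>v\<in>T-\<tau>. sg v \<rho> * u (insert v \<rho>)) = (\<Sum>v\<in>(T - {x})-\<rho>. sg v \<rho> * u (insert v \<rho>))"
        proof -
          have "T - \<tau> = (T - {x}) - \<rho>" using \<tau> by auto
          then show ?thesis by simp
        qed
        also have "\<dots> = w \<rho>" using bdL[of \<rho>] bu by simp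
        also have "w \<rho> = sg x \<rho> * z \<tau>" using xr \<tau> by (simp add: w_def)
        finally show ?thesis using bd True by (simp add: mult.assoc[symmetric] sg_sq)
      qed
    qed
    have "red_homology_nonzero K (ind_complex E (T - {x})) m"
      unfolding red_homology_nonzero_def
    proof (intro exI conjI impI)
      show "is_chain (ind_complex E (T - {x})) m z'" by (rule chz')
      show "boundary (ind_complex E (T - {x})) z' = (\<lambda>_. 0)" using cycz' by auto
      show "\<not> (\<exists>b :: 'a set \<Rightarrow> 'k. is_chain (ind_complex E (T - {x})) (Suc m) b \<and> boundary (ind_complex E (T - {x})) b = z')"
      proof
        assume "\<exists>b :: 'a set \<Rightarrow> 'k. is_chain (ind_complex E (T - {x})) (Suc m) b \<and> boundary (ind_complex E (T - {x})) b = z'"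
        then obtain b' :: "'a set \<Rightarrow> 'k" where chb': "is_chain (ind_complex E (T - {x})) (Suc m) b'"
          and bb': "boundary (ind_complex E (T - {x})) b' = z'" by blast
        have b'sa: "\<forall>F. b' F \<noteq> 0 \<longrightarrow> F \<in> ind_complex E (T - {x})" using chb' unfolding is_chain_def by blast
        have b'saT: "\<forall>F. b' F \<noteq> 0 \<longrightarrow> F \<in> ind_complex E T" using b'sa noxD' by blast
        define b where "b \<sigma> = b' \<sigma> - c \<sigma>" for \<sigma>
        have chb: "is_chain (ind_complex E T) (Suc m) b"
          using chb' chc noxD' unfolding is_chain_def b_def by (metis diff_self)
        have bsa: "\<forall>F. b F \<noteq> 0 \<longrightarrow> F \<in> ind_complex E T" using chb unfolding is_chain_def by blast
        have "boundary (ind_complex E T) b \<tau> = z \<tau>" for \<tau>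
        proof (cases "finite \<tau>")
          case False
          have "z \<tau> = 0" using zfin False by blast
          moreover have "b (insert v \<tau>) = 0" for v
            using False bsa ind_complex_finite_face[OF fin] by (metis finite_insert)
          ultimately show ?thesis using bd_alt[OF fin bsa] by simp
        next
          case ft: True
          have "boundary (ind_complex E T) b \<tau> = boundary (ind_complex E T) b' \<tau> - boundary (ind_complex E T) c \<tau>"
            unfolding bd_alt[OF fin bsa] bd_alt[OF fin b'saT] bd_alt[OF fin csa]
            by (simp add: b_def algebra_simps sum_subtractf)
          also have "boundary (ind_complex E T) b' \<tau> = (if x \<in> \<tau> then 0 else z' \<tau>)"
          proof (cases "x \<in> \<tau>")
            case True
            have "b' (insert v \<tau>) = 0" for v using True b'sa noxD' by blast
            then show ?thesis using True bd_alt[OF fin b'saT] by simp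
          next
            case False
            have "(\<Sum>v\<in>T-\<tau>. sg v \<tau> * b' (insert v \<tau>)) = sg x \<tau> * b' (insert x \<tau>) + (\<Sum>v\<in>(T-\<tau>)-{x}. sg v \<tau> * b' (insert v \<tau>))"
              using False x fin by (subst sum.remove[of _ x]) auto
            also have "b' (insert x \<tau>) = 0" using b'sa noxD' by blast
            also have "(T-\<tau>)-{x} = (T-{x}) - \<tau>" by auto
            finally show ?thesis using False bd_alt[OF fin b'saT] bd_alt[OF finT' b'sa] bb' by simp
          qed
          finally show ?thesis using bdc[OF ft] by (simp add: z'_def)
        qed
        then have "boundary (ind_complex E T) b = z" by auto
        with chb nb show False by blast
      qed
    qed
    then show ?thesis by simp
  qed
qed




definition eps :: "'a::linorder set \<Rightarrow> 'a set \<Rightarrow> 'k::field" where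
  "eps F1 F2 = (-1) ^ card {p\<in>F1 \<times> F2. snd p < fst p}"

lemma eps_nz: "eps F1 F2 \<noteq> (0::'k::field)" unfolding eps_def by simp

lemma eps_insert_left:
  assumes "finite F1" "finite F2" "v \<notin> F1"
  shows "eps (insert v F1) F2 = sg v F2 * (eps F1 F2 :: 'k::field)"
proof -
  have "{p\<in>insert v F1 \<times> F2. snd p < fst p} = {p\<in>F1 \<times> F2. snd p < fst p} \<union> Pair v ` {y\<in>F2. y < v}"
    by auto
  moreover have "card ({p\<in>F1 \<times> F2. snd p < fst p} \<union> Pair v ` {y\<in>F2. y < v}) =
      card {p\<in>F1 \<times> F2. snd p < fst p} + card (Pair v ` {y\<in>F2. y < v})"
    using assms by (intro card_Un_disjoint) auto
  moreover have "card (Pair v ` {y\<in>F2. y < v}) = card {y\<in>F2. y < v}"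
    by (intro card_image) (auto simp: inj_on_def)
  ultimately show ?thesis unfolding eps_def sg_def by (simp add: power_add)
qed

lemma eps_insert_right:
  assumes "finite F1" "finite F2" "v \<notin> F2"
  shows "eps F1 (insert v F2) = (-1) ^ card {x\<in>F1. v < x} * (eps F1 F2 :: 'k::field)"
proof -
  have "{p\<in>F1 \<times> insert v F2. snd p < fst p} = {p\<in>F1 \<times> F2. snd p < fst p} \<union> (\<lambda>x. (x, v)) ` {x\<in>F1. v < x}"
    by auto
  moreover have "card ({p\<in>F1 \<times> F2. snd p < fst p} \<union> (\<lambda>x. (x, v)) ` {x\<in>F1. v < x}) =
      card {p\<in>F1 \<times> F2. snd p < fst p} + card ((\<lambda>x. (x, v)) ` {x\<in>F1. v < x})"
    using assms by (intro card_Un_disjoint) auto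
  moreover have "card ((\<lambda>x. (x, v)) ` {x\<in>F1. v < x}) = card {x\<in>F1. v < x}"
    by (intro card_image) (auto simp: inj_on_def)
  ultimately show ?thesis unfolding eps_def by (simp add: power_add)
qed

lemma sg_union:
  assumes "finite F1" "finite F2" "F1 \<inter> F2 = {}"
  shows "sg v (F1 \<union> F2) = sg v F1 * (sg v F2 :: 'k::field)"
proof -
  have "{x\<in>F1 \<union> F2. x < v} = {x\<in>F1. x < v} \<union> {x\<in>F2. x < v}" by auto
  moreover have "card ({x\<in>F1. x < v} \<union> {x\<in>F2. x < v}) = card {x\<in>F1. x < v} + card {x\<in>F2. x < v}"
    using assms by (intro card_Un_disjoint) auto
  ultimately show ?thesis unfolding sg_def by (simp add: power_add)
qed

lemma sg_compl:
  assumes "finite F" "v \<notin> F"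
  shows "sg v F * (-1) ^ card {x\<in>F. v < x} = ((-1) ^ card F :: 'k::field)"
proof -
  have "x \<in> F \<Longrightarrow> x < v \<or> v < x" for x using assms by (metis neqE)
  then have "F = {x\<in>F. x < v} \<union> {x\<in>F. v < x}" by auto
  moreover have "card ({x\<in>F. x < v} \<union> {x\<in>F. v < x}) = card {x\<in>F. x < v} + card {x\<in>F. v < x}"
    using assms by (intro card_Un_disjoint) auto
  ultimately show ?thesis unfolding sg_def by (metis power_add)
qed

definition good :: "'k::field itself \<Rightarrow> ('a::linorder \<Rightarrow> 'a \<Rightarrow> bool) \<Rightarrow> 'a set \<Rightarrow> nat \<Rightarrow> ('a set \<Rightarrow> 'k) \<Rightarrow> bool" where
  "good K E S m z \<longleftrightarrow> is_chain (ind_complex E S) m z \<and> (\<forall>\<tau>. boundary (ind_complex E S) z \<tau> = 0)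
     \<and> (\<exists>F. z F \<noteq> 0 \<and> (\<forall>v\<in>S - F. insert v F \<notin> ind_complex E S))"

lemma good_rhn:
  assumes fin: "finite S" and g: "good (K::'k::field itself) E S m z"
  shows "red_homology_nonzero K (ind_complex E S) m"
  unfolding red_homology_nonzero_def
proof (intro exI conjI impI)
  show "is_chain (ind_complex E S) m z" using g unfolding good_def by blast
  show "boundary (ind_complex E S) z = (\<lambda>_. 0)" using g unfolding good_def by auto
  obtain F where F: "z F \<noteq> 0" "\<forall>v\<in>S - F. insert v F \<notin> ind_complex E S" using g unfolding good_def by blast
  show "\<not> (\<exists>b :: 'a set \<Rightarrow> 'k. is_chain (ind_complex E S) (Suc m) b \<and> boundary (ind_complex E S) b = z)"
  proof
    assume "\<exists>b :: 'a set \<Rightarrow> 'k. is_chain (ind_complex E S) (Suc m) b \<and> boundary (ind_complex E S) b = z"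
    then obtain b :: "'a set \<Rightarrow> 'k" where chb: "is_chain (ind_complex E S) (Suc m) b" and bb: "boundary (ind_complex E S) b = z" by blast
    have bsa: "\<forall>F. b F \<noteq> 0 \<longrightarrow> F \<in> ind_complex E S" using chb unfolding is_chain_def by blast
    have "z F = (\<Sum>v\<in>S-F. sg v F * b (insert v F))" using bd_alt[OF fin bsa, of F] bb by simp
    also have "\<dots> = 0" using F(2) bsa by (intro sum.neutral) auto
    finally show False using F(1) by simp
  qed
qed

definition prodc :: "'a::linorder set \<Rightarrow> 'a set \<Rightarrow> ('a set \<Rightarrow> 'k::field) \<Rightarrow> ('a set \<Rightarrow> 'k) \<Rightarrow> 'a set \<Rightarrow> 'k" where
  "prodc A B z1 z2 \<sigma> = (if \<sigma> \<subseteq> A \<union> B then eps (\<sigma> \<inter> A) (\<sigma> \<inter> B) * z1 (\<sigma> \<inter> A) * z2 (\<sigma> \<inter> B) else 0)"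

lemma good_prod:
  fixes E :: "'a::linorder \<Rightarrow> 'a \<Rightarrow> bool"
  assumes finA: "finite A" and finB: "finite B" and disj: "A \<inter> B = {}"
    and noe: "\<forall>a\<in>A. \<forall>b\<in>B. \<not> E a b \<and> \<not> E b a"
    and g1: "good (K::'k::field itself) E A m1 z1" and g2: "good K E B m2 z2"
  shows "good K E (A \<union> B) (m1 + m2) (prodc A B z1 z2)"
proof -
  have finAB: "finite (A \<union> B)" using finA finB by simp
  have z1s: "z1 F \<noteq> 0 \<Longrightarrow> F \<in> ind_complex E A \<and> card F = m1" for F using g1 unfolding good_def is_chain_def by blast
  have z2s: "z2 F \<noteq> 0 \<Longrightarrow> F \<in> ind_complex E B \<and> card F = m2" for F using g2 unfolding good_def is_chain_def by blast
  have z1sa: "\<forall>F. z1 F \<noteq> 0 \<longrightarrow> F \<in> ind_complex E A" using z1s by blast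
  have z2sa: "\<forall>F. z2 F \<noteq> 0 \<longrightarrow> F \<in> ind_complex E B" using z2s by blast
  have c1: "boundary (ind_complex E A) z1 \<tau> = 0" for \<tau> using g1 unfolding good_def by blast
  have c2: "boundary (ind_complex E B) z2 \<tau> = 0" for \<tau> using g2 unfolding good_def by blast
  have join: "F1 \<union> F2 \<in> ind_complex E (A \<union> B)" if "F1 \<in> ind_complex E A" "F2 \<in> ind_complex E B" for F1 F2
    using that noe unfolding ind_complex_def by blast
  have ch: "is_chain (ind_complex E (A \<union> B)) (m1 + m2) (prodc A B z1 z2)"
    unfolding is_chain_def
  proof (intro allI impI)
    fix \<sigma> assume nz: "prodc A B z1 z2 \<sigma> \<noteq> 0"
    then have sub: "\<sigma> \<subseteq> A \<union> B" and n1: "z1 (\<sigma> \<inter> A) \<noteq> 0" and n2: "z2 (\<sigma> \<inter> B) \<noteq> 0"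
      unfolding prodc_def by (auto split: if_splits)
    have s: "\<sigma> = (\<sigma> \<inter> A) \<union> (\<sigma> \<inter> B)" using sub by auto
    have "card \<sigma> = card (\<sigma> \<inter> A) + card (\<sigma> \<inter> B)"
      using finA finB disj by (subst s, intro card_Un_disjoint) auto
    then show "\<sigma> \<in> ind_complex E (A \<union> B) \<and> card \<sigma> = m1 + m2"
      using z1s[OF n1] z2s[OF n2] join[of "\<sigma> \<inter> A" "\<sigma> \<inter> B"] s by auto
  qed
  have psa: "\<forall>F. prodc A B z1 z2 F \<noteq> 0 \<longrightarrow> F \<in> ind_complex E (A \<union> B)" using ch unfolding is_chain_def by blast
  have cyc: "boundary (ind_complex E (A \<union> B)) (prodc A B z1 z2) \<tau> = 0" for \<tau>
  proof (cases "\<tau> \<subseteq> A \<union> B")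
    case False
    have "prodc A B z1 z2 (insert v \<tau>) = 0" for v using False unfolding prodc_def by auto
    then show ?thesis unfolding bd_alt[OF finAB psa] by simp
  next
    case True
    define \<tau>1 where "\<tau>1 = \<tau> \<inter> A"
    define \<tau>2 where "\<tau>2 = \<tau> \<inter> B"
    have f1: "finite \<tau>1" and f2: "finite \<tau>2" using finA finB by (auto simp: \<tau>1_def \<tau>2_def)
    have t: "\<tau> = \<tau>1 \<union> \<tau>2" and d12: "\<tau>1 \<inter> \<tau>2 = {}" using True disj by (auto simp: \<tau>1_def \<tau>2_def)
    have split: "(A \<union> B) - \<tau> = (A - \<tau>1) \<union> (B - \<tau>2)" using disj by (auto simp: \<tau>1_def \<tau>2_def)
    have "(\<Sum>v\<in>(A \<union> B) - \<tau>. sg v \<tau> * prodc A B z1 z2 (insert v \<tau>)) =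
        (\<Sum>v\<in>A - \<tau>1. sg v \<tau> * prodc A B z1 z2 (insert v \<tau>)) + (\<Sum>v\<in>B - \<tau>2. sg v \<tau> * prodc A B z1 z2 (insert v \<tau>))"
      unfolding split using finA finB disj by (intro sum.union_disjoint) auto
    also have "(\<Sum>v\<in>A - \<tau>1. sg v \<tau> * prodc A B z1 z2 (insert v \<tau>)) =
        (\<Sum>v\<in>A - \<tau>1. (eps \<tau>1 \<tau>2 * z2 \<tau>2) * (sg v \<tau>1 * z1 (insert v \<tau>1)))"
    proof (rule sum.cong)
      fix v assume v: "v \<in> A - \<tau>1"
      have vB: "v \<notin> B" using v disj by auto
      have i1: "insert v \<tau> \<inter> A = insert v \<tau>1" and i2: "insert v \<tau> \<inter> B = \<tau>2" and sub: "insert v \<tau> \<subseteq> A \<union> B"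
        using v vB True by (auto simp: \<tau>1_def \<tau>2_def)
      have "sg v \<tau> * prodc A B z1 z2 (insert v \<tau>) = (sg v \<tau>1 * sg v \<tau>2) * ((sg v \<tau>2 * eps \<tau>1 \<tau>2) * z1 (insert v \<tau>1) * z2 \<tau>2)"
        unfolding prodc_def i1 i2 using sub v by (simp add: t sg_union[OF f1 f2 d12] eps_insert_left[OF f1 f2])
      also have "\<dots> = (sg v \<tau>2 * sg v \<tau>2) * ((eps \<tau>1 \<tau>2 * z2 \<tau>2) * (sg v \<tau>1 * z1 (insert v \<tau>1)))"
        by (simp add: algebra_simps)
      finally show "sg v \<tau> * prodc A B z1 z2 (insert v \<tau>) = (eps \<tau>1 \<tau>2 * z2 \<tau>2) * (sg v \<tau>1 * z1 (insert v \<tau>1))"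
        by (simp add: sg_sq)
    qed simp
    also have "\<dots> = 0" unfolding sum_distrib_left[symmetric] using c1[of \<tau>1] bd_alt[OF finA z1sa, of \<tau>1] by simp
    also have "(\<Sum>v\<in>B - \<tau>2. sg v \<tau> * prodc A B z1 z2 (insert v \<tau>)) =
        (\<Sum>v\<in>B - \<tau>2. ((-1) ^ card \<tau>1 * eps \<tau>1 \<tau>2 * z1 \<tau>1) * (sg v \<tau>2 * z2 (insert v \<tau>2)))"
    proof (rule sum.cong)
      fix v assume v: "v \<in> B - \<tau>2"
      have vA: "v \<notin> A" "v \<notin> \<tau>1" using v disj by (auto simp: \<tau>1_def)
      have i1: "insert v \<tau> \<inter> A = \<tau>1" and i2: "insert v \<tau> \<inter> B = insert v \<tau>2" and sub: "insert v \<tau> \<subseteq> A \<union> B"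
        using v vA True by (auto simp: \<tau>1_def \<tau>2_def)
      have "sg v \<tau> * prodc A B z1 z2 (insert v \<tau>) = (sg v \<tau>1 * sg v \<tau>2) * (((-1) ^ card {x\<in>\<tau>1. v < x} * eps \<tau>1 \<tau>2) * z1 \<tau>1 * z2 (insert v \<tau>2))"
        unfolding prodc_def i1 i2 using sub v by (simp add: t sg_union[OF f1 f2 d12] eps_insert_right[OF f1 f2])
      also have "\<dots> = (sg v \<tau>1 * (-1) ^ card {x\<in>\<tau>1. v < x}) * ((eps \<tau>1 \<tau>2 * z1 \<tau>1) * (sg v \<tau>2 * z2 (insert v \<tau>2)))"
        by (simp add: algebra_simps)
      finally show "sg v \<tau> * prodc A B z1 z2 (insert v \<tau>) = ((-1) ^ card \<tau>1 * eps \<tau>1 \<tau>2 * z1 \<tau>1) * (sg v \<tau>2 * z2 (insert v \<tau>2))"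
        unfolding sg_compl[OF f1 vA(2)] by (simp add: algebra_simps)
    qed simp
    also have "\<dots> = 0" unfolding sum_distrib_left[symmetric] using c2[of \<tau>2] bd_alt[OF finB z2sa, of \<tau>2] by simp
    finally show ?thesis unfolding bd_alt[OF finAB psa] by simp
  qed
  obtain F1 where F1: "z1 F1 \<noteq> 0" "\<forall>v\<in>A - F1. insert v F1 \<notin> ind_complex E A" using g1 unfolding good_def by blast
  obtain F2 where F2: "z2 F2 \<noteq> 0" "\<forall>v\<in>B - F2. insert v F2 \<notin> ind_complex E B" using g2 unfolding good_def by blast
  have F1A: "F1 \<subseteq> A" using z1s[OF F1(1)] unfolding ind_complex_def by auto
  have F2B: "F2 \<subseteq> B" using z2s[OF F2(1)] unfolding ind_complex_def by auto
  have a: "(F1 \<union> F2) \<inter> A = F1" "(F1 \<union> F2) \<inter> B = F2" using F1A F2B disj by auto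
  have "prodc A B z1 z2 (F1 \<union> F2) \<noteq> 0"
    unfolding prodc_def a using F1A F2B F1(1) F2(1) eps_nz by auto
  moreover have "\<forall>v\<in>(A \<union> B) - (F1 \<union> F2). insert v (F1 \<union> F2) \<notin> ind_complex E (A \<union> B)"
  proof
    fix v assume v: "v \<in> (A \<union> B) - (F1 \<union> F2)"
    show "insert v (F1 \<union> F2) \<notin> ind_complex E (A \<union> B)"
    proof
      assume i: "insert v (F1 \<union> F2) \<in> ind_complex E (A \<union> B)"
      show False
      proof (cases "v \<in> A")
        case True
        have "insert v F1 \<in> ind_complex E A" using i True F1A unfolding ind_complex_def by auto
        then show False using F1(2) True v by auto
      next
        case False
        then have "v \<in> B" using v by auto
        have "insert v F2 \<in> ind_complex E B" using i \<open>v \<in> B\<close> F2B unfolding ind_complex_def by auto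
        then show False using F2(2) \<open>v \<in> B\<close> v by auto
      qed
    qed
  qed
  ultimately show ?thesis unfolding good_def using ch cyc by blast
qed




lemma good_empty: "good (K::'k::field itself) E {} 0 (\<lambda>\<sigma>. if \<sigma> = {} then 1 else 0)"
  unfolding good_def
proof (intro conjI allI exI)
  show "is_chain (ind_complex E {}) 0 (\<lambda>\<sigma>. if \<sigma> = {} then 1 else (0::'k))"
    unfolding is_chain_def ind_complex_def by auto
  then have sa: "\<forall>F. (if F = {} then 1 else (0::'k)) \<noteq> 0 \<longrightarrow> F \<in> ind_complex E {}" unfolding is_chain_def by blast
  fix \<tau>
  show "boundary (ind_complex E {}) (\<lambda>\<sigma>. if \<sigma> = {} then 1 else (0::'k)) \<tau> = 0"
    unfolding bd_alt[OF finite.emptyI sa] by simp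
qed auto

lemma sg_single: "sg v {q} = (if q < v then -1 else (1::'k::field))"
  using sg_insert[of "{}" q v] by (simp add: sg_def)

lemma boundary_add:
  "boundary \<Delta> (\<lambda>\<sigma>. c1 \<sigma> + c2 \<sigma>) \<tau> = boundary \<Delta> c1 \<tau> + boundary \<Delta> c2 \<tau>"
  unfolding boundary_def by (simp add: distrib_left sum.distrib)

lemma good_K2:
  fixes E :: "'a::linorder \<Rightarrow> 'a \<Rightarrow> bool"
  assumes ab: "a \<noteq> b" "E a b" and irr: "\<forall>x. \<not> E x x"
  shows "good (K::'k::field itself) E {a, b} 1 (\<lambda>\<sigma>. if \<sigma> = {a} then 1 else if \<sigma> = {b} then -1 else 0)"
  unfolding good_def
proof (intro conjI allI exI)
  let ?z = "\<lambda>\<sigma>. if \<sigma> = {a} then 1 else if \<sigma> = {b} then -1 else (0::'k)"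
  show ch: "is_chain (ind_complex E {a, b}) 1 ?z"
    unfolding is_chain_def ind_complex_def using irr by auto
  then have sa: "\<forall>F. ?z F \<noteq> 0 \<longrightarrow> F \<in> ind_complex E {a, b}" unfolding is_chain_def by blast
  fix \<tau>
  show "boundary (ind_complex E {a, b}) ?z \<tau> = 0"
  proof (cases "\<tau> = {}")
    case True
    have fab: "finite {a, b}" by simp
    show ?thesis unfolding bd_alt[OF fab sa] using ab True by (simp add: sg_def)
  next
    case False
    have "?z (insert v \<tau>) = 0" if "v \<notin> \<tau>" for v
      using False that by (auto simp: insert_eq_iff)
    have fab: "finite {a, b}" by simp
    show ?thesis unfolding bd_alt[OF fab sa] using \<open>\<And>v. v \<notin> \<tau> \<Longrightarrow> _\<close> by (intro sum.neutral) auto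
  qed
next
  show "(if {a} = {a} then 1 else if {a} = {b} then -1 else (0::'k)) \<noteq> 0" by simp
  show "\<forall>v\<in>{a, b} - {a}. insert v {a} \<notin> ind_complex E {a, b}"
    using ab unfolding ind_complex_def by auto
qed

definition edgec :: "'a::linorder \<Rightarrow> 'a \<Rightarrow> 'a set \<Rightarrow> 'k::field" where
  "edgec p q \<sigma> = (if \<sigma> = {p, q} then (if p < q then 1 else -1) else 0)"

lemma bd_edge:
  fixes E :: "'a::linorder \<Rightarrow> 'a \<Rightarrow> bool"
  assumes fin: "finite T" and pq: "p \<noteq> q" and face: "{p, q} \<in> ind_complex E T"
  shows "boundary (ind_complex E T) (edgec p q :: 'a set \<Rightarrow> 'k::field) \<tau> =
     (if \<tau> = {q} then 1 else 0) - (if \<tau> = {p} then 1 else 0)"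
proof -
  have sa: "\<forall>F. (edgec p q F :: 'k) \<noteq> 0 \<longrightarrow> F \<in> ind_complex E T" using face by (auto simp: edgec_def)
  have pT: "p \<in> T" "q \<in> T" using face unfolding ind_complex_def by auto
  have key: "(\<Sum>v\<in>T-\<tau>. sg v \<tau> * (edgec p q (insert v \<tau>) :: 'k)) = (if \<tau> = {q} then 1 else 0) - (if \<tau> = {p} then 1 else 0)"
  proof (cases "\<tau> = {q}")
    case True
    have "(\<Sum>v\<in>T-\<tau>. sg v \<tau> * (edgec p q (insert v \<tau>) :: 'k)) = sg p \<tau> * edgec p q (insert p \<tau>) + (\<Sum>v\<in>(T-\<tau>) - {p}. sg v \<tau> * edgec p q (insert v \<tau>))"
      using True pT pq fin by (subst sum.remove[of _ p]) auto
    also have "(\<Sum>v\<in>(T-\<tau>) - {p}. sg v \<tau> * (edgec p q (insert v \<tau>) :: 'k)) = 0"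
      using True pq by (intro sum.neutral) (auto simp: edgec_def doubleton_eq_iff)
    finally show ?thesis using True pq by (auto simp: edgec_def sg_single insert_commute)
  next
    case F1: False
    show ?thesis
    proof (cases "\<tau> = {p}")
      case True
      have "(\<Sum>v\<in>T-\<tau>. sg v \<tau> * (edgec p q (insert v \<tau>) :: 'k)) = sg q \<tau> * edgec p q (insert q \<tau>) + (\<Sum>v\<in>(T-\<tau>) - {q}. sg v \<tau> * edgec p q (insert v \<tau>))"
        using True pT pq fin by (subst sum.remove[of _ q]) auto
      also have "(\<Sum>v\<in>(T-\<tau>) - {q}. sg v \<tau> * (edgec p q (insert v \<tau>) :: 'k)) = 0"
        using True pq by (intro sum.neutral) (auto simp: edgec_def doubleton_eq_iff)
      finally show ?thesis using True pq by (auto simp: edgec_def sg_single)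
    next
      case False
      have "edgec p q (insert v \<tau>) = (0::'k)" if "v \<notin> \<tau>" for v
      proof (rule ccontr)
        assume "edgec p q (insert v \<tau>) \<noteq> (0::'k)"
        then have e: "insert v \<tau> = {p, q}" by (auto simp: edgec_def split: if_splits)
        then have "\<tau> = {p, q} - {v}" using that by auto
        moreover have "v = p \<or> v = q" using e by auto
        ultimately show False using F1 False pq by auto
      qed
      then have "(\<Sum>v\<in>T-\<tau>. sg v \<tau> * (edgec p q (insert v \<tau>) :: 'k)) = 0" by (intro sum.neutral) auto
      then show ?thesis using F1 False by simp
    qed
  qed
  show ?thesis unfolding bd_alt[OF fin sa] key ..
qed

lemma good_C5:
  fixes E :: "'a::linorder \<Rightarrow> 'a \<Rightarrow> bool"
  assumes d: "distinct [u0, u1, u2, u3, u4]" and W: "W = {u0, u1, u2, u3, u4}"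
    and sym: "\<forall>x y. E x y \<longrightarrow> E y x" and irr: "\<forall>x. \<not> E x x"
    and ne: "\<not> E u0 u1" "\<not> E u1 u2" "\<not> E u2 u3" "\<not> E u3 u4" "\<not> E u4 u0"
    and ed: "E u3 u0" "E u4 u1" "E u2 u0"
  shows "\<exists>z. good (K::'k::field itself) E W 2 z"
proof -
  have fin: "finite W" using W by simp
  have face: "{p, q} \<in> ind_complex E W" if "p \<in> W" "q \<in> W" "\<not> E p q" for p q
    using that sym irr unfolding ind_complex_def by auto
  have f01: "{u0, u1} \<in> ind_complex E W" and f12: "{u1, u2} \<in> ind_complex E W"
    and f23: "{u2, u3} \<in> ind_complex E W" and f34: "{u3, u4} \<in> ind_complex E W"
    and f40: "{u4, u0} \<in> ind_complex E W"
    using face ne W by auto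
  define z :: "'a set \<Rightarrow> 'k" where "z \<sigma> = edgec u0 u1 \<sigma> + edgec u1 u2 \<sigma> + edgec u2 u3 \<sigma> + edgec u3 u4 \<sigma> + edgec u4 u0 \<sigma>" for \<sigma>
  have ch: "is_chain (ind_complex E W) 2 z"
    unfolding is_chain_def
  proof (intro allI impI)
    fix \<sigma> assume "z \<sigma> \<noteq> 0"
    then have "\<sigma> = {u0, u1} \<or> \<sigma> = {u1, u2} \<or> \<sigma> = {u2, u3} \<or> \<sigma> = {u3, u4} \<or> \<sigma> = {u4, u0}"
      unfolding z_def edgec_def by (auto split: if_splits)
    then show "\<sigma> \<in> ind_complex E W \<and> card \<sigma> = 2"
      using f01 f12 f23 f34 f40 d by auto
  qed
  have cyc: "boundary (ind_complex E W) z \<tau> = 0" for \<tau>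
  proof -
    have "boundary (ind_complex E W) z \<tau> =
      boundary (ind_complex E W) (edgec u0 u1) \<tau> + boundary (ind_complex E W) (edgec u1 u2) \<tau> +
      boundary (ind_complex E W) (edgec u2 u3) \<tau> + boundary (ind_complex E W) (edgec u3 u4) \<tau> +
      boundary (ind_complex E W) (edgec u4 u0) \<tau>"
      unfolding z_def by (simp add: boundary_add)
    also have "\<dots> = 0"
    proof -
      have n: "u0 \<noteq> u1" "u1 \<noteq> u2" "u2 \<noteq> u3" "u3 \<noteq> u4" "u4 \<noteq> u0" using d by auto
      show ?thesis unfolding bd_edge[OF fin n(1) f01] bd_edge[OF fin n(2) f12] bd_edge[OF fin n(3) f23]
          bd_edge[OF fin n(4) f34] bd_edge[OF fin n(5) f40] by (simp add: algebra_simps)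
    qed
    finally show ?thesis .
  qed
  have zF: "z {u0, u1} \<noteq> 0"
    using d unfolding z_def edgec_def by (auto simp: doubleton_eq_iff)
  have mx: "\<forall>v\<in>W - {u0, u1}. insert v {u0, u1} \<notin> ind_complex E W"
    using W ed sym unfolding ind_complex_def by auto
  show ?thesis unfolding good_def using ch cyc zF mx by blast
qed




lemma C5_data:
  assumes "induced_C5 E W"
  obtains f :: "nat \<Rightarrow> 'a" where "W = {f 0, f 1, f 2, f 3, f 4}" "distinct [f 0, f 1, f 2, f 3, f 4]"
    "\<And>i j. i < 5 \<Longrightarrow> j < 5 \<Longrightarrow> E (f i) (f j) \<longleftrightarrow> (j = (i + 1) mod 5 \<or> i = (j + 1) mod 5)"
proof -
  obtain f :: "nat \<Rightarrow> 'a" where b: "bij_betw f {0..<5} W" and h: "\<forall>i<5. \<forall>j<5. E (f i) (f j) \<longleftrightarrow> (j = (i + 1) mod 5 \<or> i = (j + 1) mod 5)"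
    using assms unfolding induced_C5_def by blast
  have "{0..<5::nat} = {0,1,2,3,4}" by auto
  then have W: "W = {f 0, f 1, f 2, f 3, f 4}" using b unfolding bij_betw_def by auto
  have inj: "inj_on f {0..<5}" using b unfolding bij_betw_def by auto
  have q: "i < 5 \<Longrightarrow> j < 5 \<Longrightarrow> f i = f j \<Longrightarrow> i = j" for i j
    using inj unfolding inj_on_def by auto
  have "distinct [f 0, f 1, f 2, f 3, f 4]"
    using q[of 0 1] q[of 0 2] q[of 0 3] q[of 0 4] q[of 1 2] q[of 1 3] q[of 1 4] q[of 2 3] q[of 2 4] q[of 3 4]
    by auto
  then show ?thesis using that W h by blast
qed

lemma C5_card: "induced_C5 E W \<Longrightarrow> card W = 5"
  by (erule C5_data) simp

lemma K2_card: "induced_K2 E W \<Longrightarrow> card W = 2"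
  unfolding induced_K2_def by auto

lemma good_C5':
  fixes E :: "'a::linorder \<Rightarrow> 'a \<Rightarrow> bool"
  assumes c: "induced_C5 E W" and sym: "\<forall>x y. E x y \<longrightarrow> E y x" and irr: "\<forall>x. \<not> E x x"
  shows "\<exists>z. good (K::'k::field itself) E W 2 z"
proof -
  obtain f :: "nat \<Rightarrow> 'a" where W: "W = {f 0, f 1, f 2, f 3, f 4}" and d: "distinct [f 0, f 1, f 2, f 3, f 4]"
    and h: "\<And>i j. i < 5 \<Longrightarrow> j < 5 \<Longrightarrow> E (f i) (f j) \<longleftrightarrow> (j = (i + 1) mod 5 \<or> i = (j + 1) mod 5)"
    using C5_data[OF c] by blast
  show ?thesis
  proof (rule good_C5[OF _ _ sym irr])
    show "distinct [f 0, f 2, f 4, f 1, f 3]" using d by auto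
    show "W = {f 0, f 2, f 4, f 1, f 3}" using W by auto
    show "\<not> E (f 0) (f 2)" using h[of 0 2] by simp
    show "\<not> E (f 2) (f 4)" using h[of 2 4] by simp
    show "\<not> E (f 4) (f 1)" using h[of 4 1] by simp
    show "\<not> E (f 1) (f 3)" using h[of 1 3] by simp
    show "\<not> E (f 3) (f 0)" using h[of 3 0] by simp
    show "E (f 1) (f 0)" using h[of 1 0] by simp
    show "E (f 3) (f 2)" using h[of 3 2] by simp
    show "E (f 4) (f 0)" using h[of 4 0] by simp
  qed
qed

lemma good_piece:
  fixes E :: "'a::linorder \<Rightarrow> 'a \<Rightarrow> bool"
  assumes "induced_K2 E W \<or> induced_C5 E W" and sym: "\<forall>x y. E x y \<longrightarrow> E y x" and irr: "\<forall>x. \<not> E x x"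
  shows "\<exists>z. good (K::'k::field itself) E W (if induced_K2 E W then 1 else 2) z"
proof (cases "induced_K2 E W")
  case True
  then obtain a b where "W = {a, b}" "a \<noteq> b" "E a b" unfolding induced_K2_def by blast
  then show ?thesis using good_K2[of a b E, OF _ _ irr] True by auto
next
  case False
  then show ?thesis using assms good_C5'[of E W, OF _ sym irr] by auto
qed

lemma family_value_insert:
  assumes fin: "finite \<H>" and W: "W \<notin> \<H>" and p: "induced_K2 E W \<or> induced_C5 E W"
  shows "family_value E (insert W \<H>) = (if induced_K2 E W then 1 else 2) + family_value E \<H>"
proof -
  have ex: "\<not> (induced_K2 E W \<and> induced_C5 E W)" proof
    assume "induced_K2 E W \<and> induced_C5 E W"
    then have "card W = 2" "card W = 5" using K2_card C5_card by blast+
    then show False by simp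
  qed
  have f1: "finite {V\<in>\<H>. induced_K2 E V}" and f2: "finite {V\<in>\<H>. induced_C5 E V}" using fin by auto
  show ?thesis
  proof (cases "induced_K2 E W")
    case True
    have "{V\<in>insert W \<H>. induced_K2 E V} = insert W {V\<in>\<H>. induced_K2 E V}" using True by auto
    moreover have "{V\<in>insert W \<H>. induced_C5 E V} = {V\<in>\<H>. induced_C5 E V}" using True ex by auto
    ultimately show ?thesis using True W f1 unfolding family_value_def by simp
  next
    case False
    then have C: "induced_C5 E W" using p by blast
    have "{V\<in>insert W \<H>. induced_K2 E V} = {V\<in>\<H>. induced_K2 E V}" using False by auto
    moreover have "{V\<in>insert W \<H>. induced_C5 E V} = insert W {V\<in>\<H>. induced_C5 E V}" using C by auto
    ultimately show ?thesis using False W f2 unfolding family_value_def by simp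
  qed
qed

lemma admissible_finite: "finite V \<Longrightarrow> admissible_family V E \<H> \<Longrightarrow> finite \<H>"
  unfolding admissible_family_def by (rule finite_subset[of _ "Pow V"]) auto

lemma admissible_mono: "admissible_family V E \<H> \<Longrightarrow> \<H>' \<subseteq> \<H> \<Longrightarrow> admissible_family V E \<H>'"
  unfolding admissible_family_def by blast

lemma fam_good:
  fixes E :: "'a::linorder \<Rightarrow> 'a \<Rightarrow> bool"
  assumes finV: "finite V" and sym: "\<forall>x y. E x y \<longrightarrow> E y x" and irr: "\<forall>x. \<not> E x x"
    and adm: "admissible_family V E \<H>"
  shows "\<exists>z. good (K::'k::field itself) E (\<Union>\<H>) (family_value E \<H>) z"
proof -
  have "finite \<H>" using admissible_finite[OF finV adm] .
  then show ?thesis using adm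
  proof (induction \<H> rule: finite_induct)
    case empty
    have "family_value E {} = 0" unfolding family_value_def by simp
    then show ?case using good_empty by auto
  next
    case (insert W \<H>)
    have admH: "admissible_family V E \<H>" using admissible_mono[OF insert.prems] by blast
    obtain z' where g': "good K E (\<Union>\<H>) (family_value E \<H>) z'" using insert.IH[OF admH] by blast
    have p: "induced_K2 E W \<or> induced_C5 E W" and WV: "W \<subseteq> V" using insert.prems unfolding admissible_family_def by auto
    obtain zw where gw: "good K E W (if induced_K2 E W then 1 else 2) zw" using good_piece[OF p sym irr] by blast
    have finW: "finite W" using WV finV finite_subset by blast
    have "\<Union>\<H> \<subseteq> V" using admH unfolding admissible_family_def by auto
    then have finU: "finite (\<Union>\<H>)" using finV finite_subset by blast
    have pw: "W' \<in> \<H> \<Longrightarrow> W \<inter> W' = {} \<and> (\<forall>x\<in>W. \<forall>y\<in>W'. \<not> E x y) \<and> (\<forall>x\<in>W'. \<forall>y\<in>W. \<not> E x y)" for W'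
    proof -
      assume W': "W' \<in> \<H>"
      then have "W \<noteq> W'" using insert.hyps(2) by blast
      moreover have "W \<in> insert W \<H>" "W' \<in> insert W \<H>" using W' by auto
      moreover have pair: "\<forall>W1\<in>insert W \<H>. \<forall>W2\<in>insert W \<H>. W1 \<noteq> W2 \<longrightarrow> W1 \<inter> W2 = {} \<and> (\<forall>x\<in>W1. \<forall>y\<in>W2. \<not> E x y)"
        using insert.prems unfolding admissible_family_def by (rule conjunct2)
      ultimately show ?thesis using pair[rule_format, of W W'] pair[rule_format, of W' W] by auto
    qed
    have disj: "W \<inter> \<Union>\<H> = {}" using pw by blast
    have noe: "\<forall>a\<in>W. \<forall>b\<in>\<Union>\<H>. \<not> E a b \<and> \<not> E b a" using pw by blast
    have "good K E (W \<union> \<Union>\<H>) ((if induced_K2 E W then 1 else 2) + family_value E \<H>) (prodc W (\<Union>\<H>) zw z')"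
      by (rule good_prod[OF finW finU disj noe gw g'])
    then show ?case using family_value_insert[OF insert.hyps(1,2) p] by auto
  qed
qed




lemma five_cases: "(i::nat) < 5 \<Longrightarrow> i = 0 \<or> i = 1 \<or> i = 2 \<or> i = 3 \<or> i = 4" by auto

lemma mkP5:
  assumes sym: "\<forall>x y. E x y \<longrightarrow> E y x" and irr: "\<forall>x. \<not> E x x"
    and V: "a \<in> V" "b \<in> V" "c \<in> V" "d \<in> V" "e \<in> V"
    and ed: "E a b" "E b c" "E c d" "E d e"
    and ne: "\<not> E a c" "\<not> E a d" "\<not> E a e" "\<not> E b d" "\<not> E b e" "\<not> E c e"
  shows "has_induced_P5 V E"
proof -
  have ed': "E b a" "E c b" "E d c" "E e d" using ed sym by auto
  have ne': "\<not> E c a" "\<not> E d a" "\<not> E e a" "\<not> E d b" "\<not> E e b" "\<not> E e c" using ne sym by auto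
  have ir: "\<not> E a a" "\<not> E b b" "\<not> E c c" "\<not> E d d" "\<not> E e e" using irr by auto
  have "a \<noteq> b" using ed(1) ir(1) by auto
  moreover have "a \<noteq> c" using ed(3) ne(2) by auto
  moreover have "a \<noteq> d" using ed(4) ne(3) by auto
  moreover have "a \<noteq> e" using ed'(4) ne(2) by auto
  moreover have "b \<noteq> c" using ed(2) ir(2) by auto
  moreover have "b \<noteq> d" using ed(4) ne(5) by auto
  moreover have "b \<noteq> e" using ed(1) ne(3) by auto
  moreover have "c \<noteq> d" using ed(3) ir(3) by auto
  moreover have "c \<noteq> e" using ed(2) ne(5) by auto
  moreover have "d \<noteq> e" using ed(4) ir(4) by auto
  ultimately have d: "distinct [a, b, c, d, e]" by simp
  let ?f = "(!) [a, b, c, d, e]"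
  show ?thesis unfolding has_induced_P5_def
  proof (intro exI conjI)
    show "inj_on ?f {0..<5}" by (rule inj_on_nth[OF d]) auto
    have "{0..<5::nat} = {0,1,2,3,4}" by auto
    then show "?f ` {0..<5} \<subseteq> V" using V by auto
    show "\<forall>i<5. \<forall>j<5. E (?f i) (?f j) = (j = i + 1 \<or> i = j + 1)"
    proof (intro allI impI)
      fix i j :: nat assume i: "i < 5" and j: "j < 5"
      show "E (?f i) (?f j) = (j = i + 1 \<or> i = j + 1)"
        using five_cases[OF i] five_cases[OF j] by (elim disjE) (simp_all add: ed ne ed' ne' ir)
    qed
  qed
qed

definition cyc5 :: "('a \<Rightarrow> 'a \<Rightarrow> bool) \<Rightarrow> 'a \<Rightarrow> 'a \<Rightarrow> 'a \<Rightarrow> 'a \<Rightarrow> 'a \<Rightarrow> bool" where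
  "cyc5 E c0 c1 c2 c3 c4 \<longleftrightarrow> E c0 c1 \<and> E c1 c2 \<and> E c2 c3 \<and> E c3 c4 \<and> E c4 c0
     \<and> \<not> E c0 c2 \<and> \<not> E c1 c3 \<and> \<not> E c2 c4 \<and> \<not> E c3 c0 \<and> \<not> E c4 c1"

lemma cyc5_rot: "cyc5 E c0 c1 c2 c3 c4 \<Longrightarrow> cyc5 E c1 c2 c3 c4 c0"
  unfolding cyc5_def by auto

lemma cyc5_refl: "\<forall>x y. E x y \<longrightarrow> E y x \<Longrightarrow> cyc5 E c0 c1 c2 c3 c4 \<Longrightarrow> cyc5 E c0 c4 c3 c2 c1"
  unfolding cyc5_def by blast

lemma cyc5_distinct:
  assumes sym: "\<forall>x y. E x y \<longrightarrow> E y x" and irr: "\<forall>x. \<not> E x x" and c: "cyc5 E c0 c1 c2 c3 c4"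
  shows "distinct [c0, c1, c2, c3, c4]"
proof -
  have e: "E c0 c1" "E c1 c2" "E c2 c3" "E c3 c4" "E c4 c0"
    "\<not> E c0 c2" "\<not> E c1 c3" "\<not> E c2 c4" "\<not> E c3 c0" "\<not> E c4 c1" using c unfolding cyc5_def by auto
  have e': "E c1 c0" "E c2 c1" "E c3 c2" "E c4 c3" "E c0 c4"
    "\<not> E c2 c0" "\<not> E c3 c1" "\<not> E c4 c2" "\<not> E c0 c3" "\<not> E c1 c4" using e sym by blast+
  have ir: "\<not> E c0 c0" "\<not> E c1 c1" "\<not> E c2 c2" "\<not> E c3 c3" "\<not> E c4 c4" using irr by auto
  have "c0 \<noteq> c1" using e(1) ir(1) by auto
  moreover have "c0 \<noteq> c2" using \<open>E c4 c0\<close> \<open>\<not> E c4 c2\<close> by auto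
  moreover have "c0 \<noteq> c3" using \<open>E c2 c3\<close> \<open>\<not> E c2 c0\<close> by auto
  moreover have "c1 \<noteq> c2" using e(2) ir(2) by auto
  moreover have "c1 \<noteq> c3" using \<open>E c0 c1\<close> \<open>\<not> E c0 c3\<close> by auto
  moreover have "c1 \<noteq> c4" using \<open>E c1 c2\<close> \<open>\<not> E c4 c2\<close> by auto
  moreover have "c2 \<noteq> c3" using e(3) ir(3) by auto
  moreover have "c2 \<noteq> c4" using \<open>E c1 c2\<close> \<open>\<not> E c1 c4\<close> by auto
  moreover have "c3 \<noteq> c4" using e(4) ir(4) by auto
  moreover have "c0 \<noteq> c4" using e(5) ir(5) by auto
  ultimately show ?thesis by simp
qed

lemma cyc5_C5:
  assumes sym: "\<forall>x y. E x y \<longrightarrow> E y x" and irr: "\<forall>x. \<not> E x x" and c: "cyc5 E c0 c1 c2 c3 c4"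
  shows "induced_C5 E {c0, c1, c2, c3, c4}"
proof -
  have d: "distinct [c0, c1, c2, c3, c4]" by (rule cyc5_distinct[OF sym irr c])
  let ?f = "(!) [c0, c1, c2, c3, c4]"
  have e: "E c0 c1" "E c1 c2" "E c2 c3" "E c3 c4" "E c4 c0"
    "\<not> E c0 c2" "\<not> E c1 c3" "\<not> E c2 c4" "\<not> E c3 c0" "\<not> E c4 c1" using c unfolding cyc5_def by auto
  have e': "E c1 c0" "E c2 c1" "E c3 c2" "E c4 c3" "E c0 c4"
    "\<not> E c2 c0" "\<not> E c3 c1" "\<not> E c4 c2" "\<not> E c0 c3" "\<not> E c1 c4" using e sym by blast+
  have ir: "\<not> E c0 c0" "\<not> E c1 c1" "\<not> E c2 c2" "\<not> E c3 c3" "\<not> E c4 c4" using irr by auto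
  show ?thesis unfolding induced_C5_def
  proof (intro exI conjI)
    show "bij_betw ?f {0..<5} {c0, c1, c2, c3, c4}"
      by (rule bij_betw_nth[OF d]) auto
    show "\<forall>i<5. \<forall>j<5. E (?f i) (?f j) = (j = (i + 1) mod 5 \<or> i = (j + 1) mod 5)"
    proof (intro allI impI)
      fix i j :: nat assume i: "i < 5" and j: "j < 5"
      show "E (?f i) (?f j) = (j = (i + 1) mod 5 \<or> i = (j + 1) mod 5)"
        using five_cases[OF i] five_cases[OF j] by (elim disjE) (simp_all add: e e' ir)
    qed
  qed
qed

lemma C5_two_nbrs:
  assumes "induced_C5 E W" "w \<in> W"
  shows "\<exists>p q. p \<in> W \<and> q \<in> W \<and> p \<noteq> q \<and> E w p \<and> E w q"
proof -
  obtain f :: "nat \<Rightarrow> 'a" where W: "W = {f 0, f 1, f 2, f 3, f 4}" and d: "distinct [f 0, f 1, f 2, f 3, f 4]"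
    and h: "\<And>i j. i < 5 \<Longrightarrow> j < 5 \<Longrightarrow> E (f i) (f j) \<longleftrightarrow> (j = (i + 1) mod 5 \<or> i = (j + 1) mod 5)"
    using C5_data[OF assms(1)] by blast
  have e: "E (f 0) (f 1)" "E (f 0) (f 4)" "E (f 1) (f 2)" "E (f 1) (f 0)" "E (f 2) (f 3)" "E (f 2) (f 1)"
    "E (f 3) (f 4)" "E (f 3) (f 2)" "E (f 4) (f 0)" "E (f 4) (f 3)"
    using h[of 0 1] h[of 0 4] h[of 1 2] h[of 1 0] h[of 2 3] h[of 2 1] h[of 3 4] h[of 3 2] h[of 4 0] h[of 4 3] by auto
  have "w = f 0 \<or> w = f 1 \<or> w = f 2 \<or> w = f 3 \<or> w = f 4" using assms(2) W by auto
  then show ?thesis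
  proof (elim disjE)
    assume "w = f 0" then show ?thesis using e d W by (intro exI[of _ "f 1"] exI[of _ "f 4"]) auto
  next
    assume "w = f 1" then show ?thesis using e d W by (intro exI[of _ "f 2"] exI[of _ "f 0"]) auto
  next
    assume "w = f 2" then show ?thesis using e d W by (intro exI[of _ "f 3"] exI[of _ "f 1"]) auto
  next
    assume "w = f 3" then show ?thesis using e d W by (intro exI[of _ "f 4"] exI[of _ "f 2"]) auto
  next
    assume "w = f 4" then show ?thesis using e d W by (intro exI[of _ "f 0"] exI[of _ "f 3"]) auto
  qed
qed




locale tfp5 =
  fixes V :: "'a::linorder set" and E :: "'a \<Rightarrow> 'a \<Rightarrow> bool"
  assumes finV: "finite V" and sym: "\<forall>x y. E x y \<longrightarrow> E y x" and irr: "\<forall>x. \<not> E x x"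
    and tri: "\<forall>x\<in>V. \<forall>y\<in>V. \<forall>z\<in>V. \<not> (E x y \<and> E y z \<and> E x z)"
    and p5: "\<not> has_induced_P5 V E"
begin

lemma tri': "x \<in> V \<Longrightarrow> y \<in> V \<Longrightarrow> z \<in> V \<Longrightarrow> E x y \<Longrightarrow> E y z \<Longrightarrow> \<not> E x z"
  using tri by blast

lemma sy: "E x y \<Longrightarrow> E y x" using sym by blast

lemma noP5:
  assumes "a \<in> V" "b \<in> V" "c \<in> V" "d \<in> V" "e \<in> V"
    and "E a b" "E b c" "E c d" "E d e"
    and "\<not> E a c" "\<not> E a d" "\<not> E a e" "\<not> E b d" "\<not> E b e" "\<not> E c e"
  shows False
  using mkP5[OF sym irr assms] p5 by blast

definition nodom :: "'a set \<Rightarrow> bool" where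
  "nodom T \<longleftrightarrow> (\<forall>x\<in>T. \<forall>y\<in>T. x \<noteq> y \<longrightarrow> (\<exists>v\<in>T. E y v \<and> \<not> E x v))"

lemma caseA:
  assumes TV: "T \<subseteq> V" and nd: "nodom T" and c: "cyc5 E c0 c1 c2 c3 c4"
    and cT: "c0 \<in> T" "c1 \<in> T" "c2 \<in> T" "c3 \<in> T" "c4 \<in> T"
    and v: "v \<in> T" "v \<notin> {c0, c1, c2, c3, c4}" and e0: "E v c0" and e2: "E v c2"
  shows False
proof -
  have cV: "c0 \<in> V" "c1 \<in> V" "c2 \<in> V" "c3 \<in> V" "c4 \<in> V" "v \<in> V" using cT v TV by auto
  have e: "E c0 c1" "E c1 c2" "E c2 c3" "E c3 c4" "E c4 c0"
    "\<not> E c0 c2" "\<not> E c1 c3" "\<not> E c2 c4" "\<not> E c3 c0" "\<not> E c4 c1" using c unfolding cyc5_def by auto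
  have nv1: "\<not> E v c1" using tri'[OF cV(6) cV(1) cV(2) e0 e(1)] .
  have nv3: "\<not> E v c3" using tri'[OF cV(6) cV(3) cV(4) e2 e(3)] .
  have nv4: "\<not> E v c4" using tri'[OF cV(6) cV(1) cV(5) e0 sy[OF e(5)]] .
  have "c1 \<noteq> v" using v by auto
  then obtain p where p: "p \<in> T" "E v p" "\<not> E c1 p" using nd cT(2) v(1) unfolding nodom_def by blast
  have pV: "p \<in> V" using p TV by auto
  have np0: "\<not> E p c0" using tri'[OF pV cV(6) cV(1) sy[OF p(2)] e0] .
  have np2: "\<not> E p c2" using tri'[OF pV cV(6) cV(3) sy[OF p(2)] e2] .
  show False
  proof (cases "E p c4")
    case True
    have np3: "\<not> E p c3" using tri'[OF pV cV(5) cV(4) True sy[OF e(4)]] .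
    show False
      by (rule noP5[OF cV(2) cV(3) cV(6) pV cV(5) e(2) sy[OF e2] p(2) True])
        (use nv1 p(3) e(10) np2 e(8) nv4 sy in auto)
  next
    case F4: False
    show False
    proof (cases "E p c3")
      case True
      show False
        by (rule noP5[OF cV(2) cV(1) cV(6) pV cV(4) sy[OF e(1)] sy[OF e0] p(2) True])
          (use nv1 p(3) e(7) np0 e(9) nv3 sy in auto)
    next
      case False
      show False
        by (rule noP5[OF pV cV(6) cV(1) cV(5) cV(4) sy[OF p(2)] e0 sy[OF e(5)] sy[OF e(4)]])
          (use np0 F4 False nv4 nv3 e(9) sy in auto)
    qed
  qed
qed

lemma nbr_c0:
  assumes TV: "T \<subseteq> V" and nd: "nodom T" and c: "cyc5 E c0 c1 c2 c3 c4"
    and cT: "c0 \<in> T" "c1 \<in> T" "c2 \<in> T" "c3 \<in> T" "c4 \<in> T"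
    and v: "v \<in> T" "v \<notin> {c0, c1, c2, c3, c4}" and e0: "E v c0"
  shows False
proof -
  have cV: "c0 \<in> V" "c1 \<in> V" "c2 \<in> V" "c3 \<in> V" "c4 \<in> V" "v \<in> V" using cT v TV by auto
  have e: "E c0 c1" "E c1 c2" "E c2 c3" "E c3 c4" "E c4 c0"
    "\<not> E c0 c2" "\<not> E c1 c3" "\<not> E c2 c4" "\<not> E c3 c0" "\<not> E c4 c1" using c unfolding cyc5_def by auto
  show False
  proof (cases "E v c2")
    case True
    then show False using caseA[OF TV nd c cT v e0] by blast
  next
    case n2: False
    show False
    proof (cases "E v c3")
      case True
      have c': "cyc5 E c0 c4 c3 c2 c1" by (rule cyc5_refl[OF sym c])
      have "v \<notin> {c0, c4, c3, c2, c1}" using v by auto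
      then show False using caseA[OF TV nd c' cT(1) cT(5) cT(4) cT(3) cT(2) v(1) _ e0 True] by blast
    next
      case False
      have nv1: "\<not> E v c1" using tri'[OF cV(6) cV(1) cV(2) e0 e(1)] .
      show False
        by (rule noP5[OF cV(6) cV(1) cV(2) cV(3) cV(4) e0 e(1) e(2) e(3)])
          (use nv1 n2 False e(6) e(9) e(7) sy in auto)
    qed
  qed
qed

lemma component:
  assumes TV: "T \<subseteq> V" and nd: "nodom T" and c: "cyc5 E c0 c1 c2 c3 c4"
    and cT: "c0 \<in> T" "c1 \<in> T" "c2 \<in> T" "c3 \<in> T" "c4 \<in> T"
    and v: "v \<in> T" "v \<notin> {c0, c1, c2, c3, c4}" and u: "u \<in> {c0, c1, c2, c3, c4}"
  shows "\<not> E v u \<and> \<not> E u v"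
proof -
  have c1: "cyc5 E c1 c2 c3 c4 c0" by (rule cyc5_rot[OF c])
  have c2: "cyc5 E c2 c3 c4 c0 c1" by (rule cyc5_rot[OF c1])
  have c3: "cyc5 E c3 c4 c0 c1 c2" by (rule cyc5_rot[OF c2])
  have c4: "cyc5 E c4 c0 c1 c2 c3" by (rule cyc5_rot[OF c3])
  have "\<not> E v u"
  proof
    assume e: "E v u"
    have "u = c0 \<or> u = c1 \<or> u = c2 \<or> u = c3 \<or> u = c4" using u by auto
    then show False
    proof (elim disjE)
      assume "u = c0" then show False using nbr_c0[OF TV nd c cT v] e by blast
    next
      assume "u = c1" then show False using nbr_c0[OF TV nd c1 cT(2-5) cT(1) v(1)] v(2) e by auto
    next
      assume "u = c2" then show False using nbr_c0[OF TV nd c2 cT(3-5) cT(1-2) v(1)] v(2) e by auto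
    next
      assume "u = c3" then show False using nbr_c0[OF TV nd c3 cT(4-5) cT(1-3) v(1)] v(2) e by auto
    next
      assume "u = c4" then show False using nbr_c0[OF TV nd c4 cT(5) cT(1-4) v(1)] v(2) e by auto
    qed
  qed
  then show ?thesis using sy by blast
qed

end




lemma no_rhn_card:
  assumes "\<forall>F\<in>\<Delta>. card F \<noteq> m"
  shows "\<not> red_homology_nonzero (K::'k::field itself) \<Delta> m"
proof
  assume "red_homology_nonzero K \<Delta> m"
  then obtain z :: "'a::linorder set \<Rightarrow> 'k" where ch: "is_chain \<Delta> m z"
    and nb: "\<not> (\<exists>b :: 'a set \<Rightarrow> 'k. is_chain \<Delta> (Suc m) b \<and> boundary \<Delta> b = z)"
    unfolding red_homology_nonzero_def by blast
  have "z = (\<lambda>_. 0)" using ch assms unfolding is_chain_def by auto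
  moreover have "is_chain \<Delta> (Suc m) (\<lambda>_. 0 :: 'k)" unfolding is_chain_def by simp
  moreover have "boundary \<Delta> (\<lambda>_. 0 :: 'k) = (\<lambda>_. 0)" unfolding boundary_def by (simp add: fun_eq_iff)
  ultimately show False using nb by blast
qed

lemma admissible_insert:
  assumes adm: "admissible_family S E \<H>" and ST: "S \<subseteq> T" and WT: "W \<subseteq> T"
    and p: "induced_K2 E W \<or> induced_C5 E W" and d: "W \<inter> S = {}"
    and ne: "\<forall>a\<in>W. \<forall>b\<in>S. \<not> E a b \<and> \<not> E b a"
  shows "admissible_family T E (insert W \<H>)"
proof -
  have sub: "\<forall>W'\<in>\<H>. W' \<subseteq> S \<and> (induced_K2 E W' \<or> induced_C5 E W')" using adm unfolding admissible_family_def by (rule conjunct1)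
  have pw: "\<forall>W1\<in>\<H>. \<forall>W2\<in>\<H>. W1 \<noteq> W2 \<longrightarrow> W1 \<inter> W2 = {} \<and> (\<forall>x\<in>W1. \<forall>y\<in>W2. \<not> E x y)"
    using adm unfolding admissible_family_def by (rule conjunct2)
  have A: "\<forall>W'\<in>insert W \<H>. W' \<subseteq> T \<and> (induced_K2 E W' \<or> induced_C5 E W')"
  proof
    fix W' assume "W' \<in> insert W \<H>"
    then show "W' \<subseteq> T \<and> (induced_K2 E W' \<or> induced_C5 E W')"
    proof
      assume "W' = W" then show ?thesis using WT p by simp
    next
      assume "W' \<in> \<H>" then show ?thesis using sub ST by blast
    qed
  qed
  have B: "W1 \<inter> W2 = {} \<and> (\<forall>x\<in>W1. \<forall>y\<in>W2. \<not> E x y)"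
    if w1: "W1 \<in> insert W \<H>" and w2: "W2 \<in> insert W \<H>" and n: "W1 \<noteq> W2" for W1 W2
  proof (cases "W1 = W")
    case True
    then have "W2 \<in> \<H>" using w2 n by auto
    then have s2: "W2 \<subseteq> S" using sub by blast
    have "W \<inter> W2 = {}" using d s2 by auto
    moreover have "\<forall>a\<in>W. \<forall>b\<in>W2. \<not> E a b" using ne s2 by auto
    ultimately show ?thesis using True by simp
  next
    case F1: False
    then have h1: "W1 \<in> \<H>" using w1 by auto
    show ?thesis
    proof (cases "W2 = W")
      case True
      have s1: "W1 \<subseteq> S" using h1 sub by blast
      have "W1 \<inter> W = {}" using d s1 by auto
      moreover have "\<forall>a\<in>W1. \<forall>b\<in>W. \<not> E a b" using ne s1 by auto
      ultimately show ?thesis using True by simp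
    next
      case False
      then have "W2 \<in> \<H>" using w2 by auto
      then show ?thesis using pw h1 n by blast
    qed
  qed
  show ?thesis unfolding admissible_family_def
  proof (intro conjI)
    show "\<forall>W'\<in>insert W \<H>. W' \<subseteq> T \<and> (induced_K2 E W' \<or> induced_C5 E W')" by (rule A)
    show "\<forall>W1\<in>insert W \<H>. \<forall>W2\<in>insert W \<H>. W1 \<noteq> W2 \<longrightarrow> W1 \<inter> W2 = {} \<and> (\<forall>x\<in>W1. \<forall>y\<in>W2. \<not> E x y)"
    proof (intro ballI impI)
      fix W1 W2 assume "W1 \<in> insert W \<H>" "W2 \<in> insert W \<H>" "W1 \<noteq> W2"
      then show "W1 \<inter> W2 = {} \<and> (\<forall>x\<in>W1. \<forall>y\<in>W2. \<not> E x y)" by (rule B)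
    qed
  qed
qed

lemma admissible_restrict:
  assumes adm: "admissible_family S E \<H>" and sub: "\<H>0 \<subseteq> \<H>" and W: "\<forall>W\<in>\<H>0. W \<subseteq> S'"
  shows "admissible_family S' E \<H>0"
proof -
  have a: "\<forall>W\<in>\<H>. W \<subseteq> S \<and> (induced_K2 E W \<or> induced_C5 E W)"
    using adm unfolding admissible_family_def by (rule conjunct1)
  have b: "\<forall>W1\<in>\<H>. \<forall>W2\<in>\<H>. W1 \<noteq> W2 \<longrightarrow> W1 \<inter> W2 = {} \<and> (\<forall>x\<in>W1. \<forall>y\<in>W2. \<not> E x y)"
    using adm unfolding admissible_family_def by (rule conjunct2)
  show ?thesis unfolding admissible_family_def
  proof (intro conjI)
    show "\<forall>W\<in>\<H>0. W \<subseteq> S' \<and> (induced_K2 E W \<or> induced_C5 E W)" using a sub W by blast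
    show "\<forall>W1\<in>\<H>0. \<forall>W2\<in>\<H>0. W1 \<noteq> W2 \<longrightarrow> W1 \<inter> W2 = {} \<and> (\<forall>x\<in>W1. \<forall>y\<in>W2. \<not> E x y)"
    proof (intro ballI impI)
      fix W1 W2 assume "W1 \<in> \<H>0" "W2 \<in> \<H>0" "W1 \<noteq> W2"
      then have "W1 \<in> \<H>" "W2 \<in> \<H>" "W1 \<noteq> W2" using sub by auto
      then show "W1 \<inter> W2 = {} \<and> (\<forall>x\<in>W1. \<forall>y\<in>W2. \<not> E x y)" using b by blast
    qed
  qed
qed

lemma admissible_mono_set: "admissible_family S E \<H> \<Longrightarrow> S \<subseteq> T \<Longrightarrow> admissible_family T E \<H>"
  unfolding admissible_family_def by blast

lemma admissible_empty: "admissible_family T E {}"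
  unfolding admissible_family_def by simp

lemma K2_notin:
  assumes "admissible_family S E \<H>" "W \<inter> S = {}" "W \<noteq> {}"
  shows "W \<notin> \<H>"
  using assms unfolding admissible_family_def by blast

context tfp5
begin

lemma step_K2:
  assumes TV: "T \<subseteq> V" and x: "x \<in> T" and y: "y \<in> T" and exy: "E x y"
    and ny: "\<forall>v\<in>T. E y v \<longrightarrow> v = x" and nx: "\<forall>v\<in>T. E x v \<longrightarrow> v = y"
    and adm: "admissible_family (T - insert x {v. E x v}) E \<H>'" and k: "k \<le> family_value E \<H>'"
  shows "\<exists>\<H>. admissible_family T E \<H> \<and> Suc k \<le> family_value E \<H>"
proof -
  let ?L = "T - insert x {v. E x v}"
  have xy: "x \<noteq> y" using exy irr by auto
  have K: "induced_K2 E {x, y}" unfolding induced_K2_def using xy exy by auto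
  have d: "{x, y} \<inter> ?L = {}" using exy by auto
  have ne: "\<forall>a\<in>{x, y}. \<forall>b\<in>?L. \<not> E a b \<and> \<not> E b a"
    using ny sym by auto
  have adm2: "admissible_family T E (insert {x, y} \<H>')"
    by (rule admissible_insert[OF adm _ _ _ d ne]) (use x y K in auto)
  have finT: "finite T" using TV finV finite_subset by blast
  have fin: "finite \<H>'" using admissible_finite[OF _ adm] finT by auto
  have notin: "{x, y} \<notin> \<H>'" using K2_notin[OF adm d] by auto
  have "family_value E (insert {x, y} \<H>') = 1 + family_value E \<H>'"
    using family_value_insert[OF fin notin] K by auto
  then show ?thesis using adm2 k by auto
qed

lemma step_C5:
  assumes TV: "T \<subseteq> V" and nd: "nodom T" and x: "x \<in> T" and a: "a1 \<in> T" "a2 \<in> T"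
    and ex: "E x a1" "E x a2" and a12: "a1 \<noteq> a2"
    and adm: "admissible_family (T - insert x {v. E x v}) E \<H>'" and k: "k \<le> family_value E \<H>'"
  shows "\<exists>\<H>. admissible_family T E \<H> \<and> Suc k \<le> family_value E \<H>"
proof -
  define L where "L = T - insert x {v. E x v}"
  have finT: "finite T" using TV finV finite_subset by blast
  have xV: "x \<in> V" and aV: "a1 \<in> V" "a2 \<in> V" using x a TV by auto
  have na12: "\<not> E a1 a2" using tri'[OF aV(1) xV aV(2) sy[OF ex(1)] ex(2)] .
  obtain c1 where c1: "c1 \<in> T" "E a1 c1" "\<not> E a2 c1" using nd a a12 unfolding nodom_def by metis
  obtain c2 where c2: "c2 \<in> T" "E a2 c2" "\<not> E a1 c2" using nd a a12 unfolding nodom_def by metis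
  have cV: "c1 \<in> V" "c2 \<in> V" using c1 c2 TV by auto
  have nxc1: "\<not> E x c1" using tri'[OF xV aV(1) cV(1) ex(1) c1(2)] .
  have nxc2: "\<not> E x c2" using tri'[OF xV aV(2) cV(2) ex(2) c2(2)] .
  have ec: "E c1 c2"
  proof (rule ccontr)
    assume n: "\<not> E c1 c2"
    show False
      by (rule noP5[OF cV(1) aV(1) xV aV(2) cV(2) sy[OF c1(2)] sy[OF ex(1)] ex(2) c2(2)])
        (use nxc1 c1(3) n na12 c2(3) nxc2 sy in auto)
  qed
  have cyc: "cyc5 E x a2 c2 c1 a1"
    unfolding cyc5_def using ex c1 c2 ec nxc1 nxc2 na12 sy by blast
  define C where "C = {x, a2, c2, c1, a1}"
  have CT: "C \<subseteq> T" using x a c1 c2 by (auto simp: C_def)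
  have C5: "induced_C5 E C" unfolding C_def by (rule cyc5_C5[OF sym irr cyc])
  have comp: "\<not> E v u \<and> \<not> E u v" if "v \<in> T" "v \<notin> C" "u \<in> C" for u v
    using component[OF TV nd cyc x a(2) c2(1) c1(1) a(1)] that by (auto simp: C_def)
  have dist: "distinct [x, a2, c2, c1, a1]" by (rule cyc5_distinct[OF sym irr cyc])
  have CL: "C \<inter> L \<subseteq> {c1, c2}" using ex by (auto simp: C_def L_def)
  have c12: "c1 \<noteq> c2" using dist by auto
  have meet: "W = {c1, c2}" if W: "W \<in> \<H>'" and m: "W \<inter> C \<noteq> {}" for W
  proof -
    have WL: "W \<subseteq> L" and p: "induced_K2 E W \<or> induced_C5 E W"
      using adm W unfolding admissible_family_def L_def by auto
    have inC: "q \<in> C" if "q \<in> W" "w \<in> W \<inter> C" "E w q" for q w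
    proof (rule ccontr)
      assume "q \<notin> C"
      moreover have "q \<in> T" using that WL unfolding L_def by auto
      ultimately show False using comp[of q w] that by auto
    qed
    show ?thesis
    proof (cases "induced_K2 E W")
      case True
      then obtain p q where W': "W = {p, q}" "p \<noteq> q" "E p q" unfolding induced_K2_def by blast
      have "p \<in> C \<or> q \<in> C" using m W' by auto
      then have "p \<in> C \<and> q \<in> C"
      proof
        assume pc: "p \<in> C"
        have "q \<in> C" by (rule inC[of q p]) (use W' pc in auto)
        then show ?thesis using pc by simp
      next
        assume qc: "q \<in> C"
        have "p \<in> C" by (rule inC[of p q]) (use W' qc sy[OF W'(3)] in auto)
        then show ?thesis using qc by simp
      qed
      then have "p \<in> {c1, c2}" "q \<in> {c1, c2}" using CL WL W' by auto
      then show ?thesis using W' c12 by auto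
    next
      case False
      then have C5W: "induced_C5 E W" using p by blast
      obtain w where w: "w \<in> W \<inter> C" using m by blast
      obtain p q where pq: "p \<in> W" "q \<in> W" "p \<noteq> q" "E w p" "E w q"
        using C5_two_nbrs[OF C5W, of w] w by blast
      have "p \<in> C" "q \<in> C" "w \<in> C" using inC[OF pq(1) w pq(4)] inC[OF pq(2) w pq(5)] w by auto
      then have "p \<in> {c1, c2}" "q \<in> {c1, c2}" "w \<in> {c1, c2}" using CL WL pq w by auto
      moreover have "p \<noteq> w" "q \<noteq> w" using pq irr by auto
      ultimately show ?thesis using pq(3) by auto
    qed
  qed
  define H0 where "H0 = \<H>' - {{c1, c2}}"
  have adm0: "admissible_family (L - C) E H0"
  proof -
    have "\<forall>W\<in>H0. W \<subseteq> L - C"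
    proof
      fix W assume "W \<in> H0"
      then have "W \<in> \<H>'" "W \<noteq> {c1, c2}" by (auto simp: H0_def)
      then have "W \<inter> C = {}" using meet by blast
      moreover have "W \<subseteq> L" using \<open>W \<in> \<H>'\<close> adm unfolding admissible_family_def L_def by auto
      ultimately show "W \<subseteq> L - C" by auto
    qed
    then show ?thesis using admissible_restrict[OF adm, of H0] by (auto simp: H0_def)
  qed
  have adm2: "admissible_family T E (insert C H0)"
  proof (rule admissible_insert[OF adm0 _ CT])
    show "L - C \<subseteq> T" by (auto simp: L_def)
    show "induced_K2 E C \<or> induced_C5 E C" using C5 by blast
    show "C \<inter> (L - C) = {}" by auto
    show "\<forall>a\<in>C. \<forall>b\<in>L - C. \<not> E a b \<and> \<not> E b a" using comp by (auto simp: L_def)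
  qed
  have fin: "finite \<H>'" using admissible_finite[OF _ adm] finT by auto
  have fin0: "finite H0" using fin by (auto simp: H0_def)
  have notin: "C \<notin> H0" using K2_notin[OF adm0] by (auto simp: C_def)
  have notK: "\<not> induced_K2 E C" using C5_card[OF C5] K2_card by force
  have v2: "family_value E (insert C H0) = 2 + family_value E H0"
    using family_value_insert[OF fin0 notin] C5 notK by auto
  have v1: "family_value E \<H>' \<le> 1 + family_value E H0"
  proof (cases "{c1, c2} \<in> \<H>'")
    case True
    have K: "induced_K2 E {c1, c2}" unfolding induced_K2_def using c12 ec by auto
    have "\<H>' = insert {c1, c2} H0" using True by (auto simp: H0_def)
    moreover have "family_value E (insert {c1, c2} H0) = 1 + family_value E H0"
      using family_value_insert[OF fin0, of "{c1, c2}"] K by (auto simp: H0_def)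
    ultimately show ?thesis by simp
  next
    case False
    then have "H0 = \<H>'" by (auto simp: H0_def)
    then show ?thesis by simp
  qed
  show ?thesis using adm2 v1 v2 k by (intro exI[of _ "insert C H0"]) auto
qed

end




context tfp5
begin

lemma UB:
  assumes "T \<subseteq> V" "red_homology_nonzero (K::'k::field itself) (ind_complex E T) j"
  shows "\<exists>\<H>. admissible_family T E \<H> \<and> j \<le> family_value E \<H>"
  using assms
proof (induction "card T" arbitrary: T j rule: less_induct)
  case less
  have TV: "T \<subseteq> V" and rh: "red_homology_nonzero K (ind_complex E T) j" using less.prems by auto
  have finT: "finite T" using TV finV finite_subset by blast
  have IH: "\<exists>\<H>. admissible_family T' E \<H> \<and> j' \<le> family_value E \<H>"
    if "T' \<subset> T" "red_homology_nonzero K (ind_complex E T') j'" for T' j'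
  proof -
    have "card T' < card T" using psubset_card_mono[OF finT that(1)] .
    moreover have "T' \<subseteq> V" using that(1) TV by auto
    ultimately show ?thesis using less.hyps that(2) by blast
  qed
  have left: "\<exists>\<H>. admissible_family T E \<H> \<and> j \<le> family_value E \<H>"
    if x: "x \<in> T" and r: "red_homology_nonzero K (ind_complex E (T - {x})) j" for x
  proof -
    obtain \<H> where "admissible_family (T - {x}) E \<H>" "j \<le> family_value E \<H>"
      using IH[OF _ r] x by blast
    then show ?thesis using admissible_mono_set[of "T - {x}" E \<H> T] by blast
  qed
  show ?case
  proof (cases j)
    case 0
    then show ?thesis using admissible_empty by blast
  next
    case (Suc k)
    show ?thesis
    proof (cases "\<exists>y\<in>T. \<forall>v\<in>T. \<not> E y v")
      case True
      then obtain y where y: "y \<in> T" "\<forall>v\<in>T. \<not> E y v" by blast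
      have "\<forall>v\<in>T. \<not> E y v \<and> \<not> E v y" using y sym by blast
      then have "\<not> red_homology_nonzero K (ind_complex E T) j"
        using cone_vanish[OF finT y(1)] irr by blast
      then show ?thesis using rh by blast
    next
      case noiso: False
      show ?thesis
      proof (cases "nodom T")
        case False
        then obtain x y where xy: "x \<in> T" "y \<in> T" "x \<noteq> y" "\<forall>v\<in>T. E y v \<longrightarrow> E x v"
          unfolding nodom_def by blast
        from mv[OF finT xy(1) sym irr rh]
        show ?thesis
        proof
          assume "red_homology_nonzero K (ind_complex E (T - {x})) j"
          then show ?thesis using left xy(1) by blast
        next
          assume "\<exists>k. j = Suc k \<and> red_homology_nonzero K (ind_complex E (T - insert x {v. E x v})) k"
          then obtain k' where r: "red_homology_nonzero K (ind_complex E (T - insert x {v. E x v})) k'" by blast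
          have nxy: "\<not> E x y" using xy irr sym by blast
          have yL: "y \<in> T - insert x {v. E x v}" using xy nxy by auto
          have "\<forall>v\<in>T - insert x {v. E x v}. \<not> E y v \<and> \<not> E v y" using xy sym by blast
          then show ?thesis using cone_vanish[OF _ yL] irr r finT by blast
        qed
      next
        case nd: True
        have "T \<noteq> {}"
        proof
          assume "T = {}"
          then have "\<forall>F\<in>ind_complex E T. card F \<noteq> j" using Suc unfolding ind_complex_def by auto
          then show False using no_rhn_card rh by blast
        qed
        then obtain x where x: "x \<in> T" by blast
        obtain y where y: "y \<in> T" "E x y" using noiso x by blast
        from mv[OF finT x sym irr rh]
        show ?thesis
        proof
          assume "red_homology_nonzero K (ind_complex E (T - {x})) j"
          then show ?thesis using left x by blast
        next
          assume "\<exists>k. j = Suc k \<and> red_homology_nonzero K (ind_complex E (T - insert x {v. E x v})) k"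
          then have r: "red_homology_nonzero K (ind_complex E (T - insert x {v. E x v})) k" using Suc by auto
          have "T - insert x {v. E x v} \<subset> T" using x by auto
          then obtain \<H>' where adm: "admissible_family (T - insert x {v. E x v}) E \<H>'" and kv: "k \<le> family_value E \<H>'"
            using IH[OF _ r] by blast
          show ?thesis
          proof (cases "\<exists>a1\<in>T. \<exists>a2\<in>T. E x a1 \<and> E x a2 \<and> a1 \<noteq> a2")
            case True
            then obtain a1 a2 where a: "a1 \<in> T" "a2 \<in> T" "E x a1" "E x a2" "a1 \<noteq> a2" by blast
            show ?thesis using step_C5[OF TV nd x a adm kv] Suc by simp
          next
            case False
            have nx: "\<forall>v\<in>T. E x v \<longrightarrow> v = y" using False y by blast
            have ny: "\<forall>v\<in>T. E y v \<longrightarrow> v = x"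
            proof (intro ballI impI)
              fix v assume v: "v \<in> T" "E y v"
              show "v = x"
              proof (rule ccontr)
                assume "v \<noteq> x"
                then obtain w where w: "w \<in> T" "E x w" "\<not> E v w" using nd v(1) x unfolding nodom_def by blast
                have "w = y" using nx w by blast
                then show False using w(3) v(2) sym by blast
              qed
            qed
            show ?thesis using step_K2[OF TV x y(1) y(2) ny nx adm kv] Suc by simp
          qed
        qed
      qed
    qed
  qed
qed

end

theorem mainTheorem5:
  fixes V :: "'a::linorder set" and E :: "'a \<Rightarrow> 'a \<Rightarrow> bool"
  assumes "simple_graph V E"
    and "\<not> has_induced_triangle V E"
    and "\<not> has_induced_P5 V E"
  shows "reg TYPE('k::field) V E = Max (family_value E ` {\<H>. admissible_family V E \<H>})"
proof -
  have finV: "finite V" and sym: "\<forall>x y. E x y \<longrightarrow> E y x" and irr: "\<forall>x. \<not> E x x"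
    using assms(1) unfolding simple_graph_def by auto
  have tri: "\<forall>x\<in>V. \<forall>y\<in>V. \<forall>z\<in>V. \<not> (E x y \<and> E y z \<and> E x z)"
    using assms(2) unfolding has_induced_triangle_def by blast
  interpret tfp5 V E using finV sym irr tri assms(3) by unfold_locales
  define J where "J = {j. \<exists>S\<subseteq>V. red_homology_nonzero TYPE('k) (ind_complex E S) j}"
  define F where "F = family_value E ` {\<H>. admissible_family V E \<H>}"
  have finF: "finite F"
  proof -
    have "{\<H>. admissible_family V E \<H>} \<subseteq> Pow (Pow V)" unfolding admissible_family_def by auto
    then have "finite {\<H>. admissible_family V E \<H>}" using finV finite_subset by (metis finite_Pow_iff)
    then show ?thesis unfolding F_def by simp
  qed
  have F0: "0 \<in> F" unfolding F_def using admissible_empty[of V E]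
    by (intro image_eqI[of _ _ "{}"]) (auto simp: family_value_def)
  have finJ: "finite J"
  proof (rule finite_subset[of _ "{..card V}"])
    show "J \<subseteq> {..card V}"
    proof
      fix j assume "j \<in> J"
      then obtain S where S: "S \<subseteq> V" "red_homology_nonzero TYPE('k) (ind_complex E S) j" unfolding J_def by blast
      have finS: "finite S" using S finV finite_subset by blast
      have "j \<le> card S"
      proof (rule ccontr)
        assume "\<not> j \<le> card S"
        then have "\<forall>F\<in>ind_complex E S. card F \<noteq> j"
          unfolding ind_complex_def using card_mono[OF finS] by fastforce
        then show False using no_rhn_card S(2) by blast
      qed
      then show "j \<in> {..card V}" using card_mono[OF finV S(1)] by auto
    qed
  qed simp
  have FJ: "f \<in> J" if fF: "f \<in> F" for f
  proof -
    obtain \<H> where adm: "admissible_family V E \<H>" and f: "f = family_value E \<H>" using fF unfolding F_def by blast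
    obtain z :: "'a set \<Rightarrow> 'k" where g: "good TYPE('k) E (\<Union>\<H>) (family_value E \<H>) z"
      using fam_good[OF finV sym irr adm] by blast
    have sub: "\<Union>\<H> \<subseteq> V" using adm unfolding admissible_family_def by auto
    have "finite (\<Union>\<H>)" using sub finV finite_subset by blast
    then have "red_homology_nonzero TYPE('k) (ind_complex E (\<Union>\<H>)) (family_value E \<H>)"
      using good_rhn g by blast
    then show ?thesis unfolding J_def f using sub by blast
  qed
  have JF: "\<exists>f\<in>F. j \<le> f" if jJ: "j \<in> J" for j
  proof -
    obtain S where S: "S \<subseteq> V" "red_homology_nonzero TYPE('k) (ind_complex E S) j" using jJ unfolding J_def by blast
    obtain \<H> where "admissible_family S E \<H>" "j \<le> family_value E \<H>" using UB[OF S] by blast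
    then show ?thesis using admissible_mono_set[OF _ S(1)] unfolding F_def by blast
  qed
  have J0: "J \<noteq> {}" using FJ F0 by blast
  have "Max J = Max F"
  proof (rule antisym)
    show "Max J \<le> Max F"
      using finJ J0
    proof (subst Max_le_iff)
      show "\<forall>a\<in>J. a \<le> Max F" using JF finF Max_ge order_trans by blast
    qed auto
    show "Max F \<le> Max J"
      using finF F0
    proof (subst Max_le_iff)
      show "\<forall>a\<in>F. a \<le> Max J" using FJ finJ Max_ge by blast
    qed auto
  qed
  then show ?thesis unfolding reg_def J_def F_def by simp
qed



end
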